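(* Let $G$ be a cubic near-bipartite brick with at least six vertices. Then $G$ has a $K_4$-decomposition if and only if $G$ is a tri-ladder.
   Context: Graphs may have multiple edges but no loops. An edge is admissible if it lies in some perfect matching; a connected graph with at least two vertices is matching covered if every edge is admissible. A brick is a 3-connected nonbipartite graph $G$ such that $G-x-y$ has a perfect matching for all distinct $x,y$. A nonbipartite matching covered graph $G$ is near-bipartite if it has a pair of edges $\{e_1,e_2\}$ such that $G-\{e_1,e_2\}$ is bipartite matching covered. For $X\subseteq V(G)$, $\overline{X}=V(G)\setminus X$ and $\partial(X)$ is the set of edges with exactly one end in $X$; the cut is nontrivial if $|X|,|\overline X|\ge 2$. $G/X$ is obtained by contracting $X$ to a single vertex $x$ (removing edges inside $X$), $G/\overline X$ similarly with vertex $\overline x$; these are the $\partial(X)$-contractions, and $G$ is a splicing of $G/X$ and $G/\overline{X}$ at $x$ and $\overline{x}$. A 3-cut-decomposition of a 3-connected cubic graph is obtained by repeatedly choosing a graph in the current list that has a nontrivial 3-cut $C$ and replacing it by its two $C$-contractions, until no graph in the list has a nontrivial 3-cut; it is a $K_4$-decomposition if the final list consists only of copies of $K_4$. A graph has a $K_4$-decomposition if some 3-cut-decomposition of it is a $K_4$-decomposition. $\overline{C_6}$ denotes the complement of the 6-cycle (the triangular prism). A graph $G$ is a tri-ladder if there is a sequence $G_0,\dots,G_r$ ($r\ge0$) with $G_0=\overline{C_6}$, $G_r=G$, and for $1\le i\le r$, $G_i$ is a splicing of $G_{i-1}$ and $K_4$ at a vertex of $G_{i-1}$ lying in a triangle of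 $G_{i-1}$ and a vertex of $K_4$. *)

theory Defs
  imports Main
begin

text \<open>A graph has a vertex set, an edge set, and an end-function assigning to each
edge its (two-element) set of ends. Parallel edges are allowed; loops are not.\<close>

record ('v, 'e) mgraph =
  gV :: "'v set"
  gE :: "'e set"
  ends :: "'e \<Rightarrow> 'v set"

definition wf_graph :: "('v, 'e) mgraph \<Rightarrow> bool" where
  "wf_graph G \<longleftrightarrow> finite (gV G) \<and> finite (gE G) \<and>
     (\<forall>e\<in>gE G. ends G e \<subseteq> gV G \<and> card (ends G e) = 2)"

definition degree :: "('v, 'e) mgraph \<Rightarrow> 'v \<Rightarrow> nat" where
  "degree G v = card {e \<in> gE G. v \<in> ends G e}"

definition cubic :: "('v, 'e) mgraph \<Rightarrow> bool" where
  "cubic G \<longleftrightarrow> (\<forall>v\<in>gV G. degree G v = 3)"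

definition adj :: "('v, 'e) mgraph \<Rightarrow> 'v \<Rightarrow> 'v \<Rightarrow> bool" where
  "adj G u v \<longleftrightarrow> (\<exists>e\<in>gE G. ends G e = {u, v})"

definition connected :: "('v, 'e) mgraph \<Rightarrow> bool" where
  "connected G \<longleftrightarrow> gV G \<noteq> {} \<and> (\<forall>u\<in>gV G. \<forall>v\<in>gV G. (adj G)\<^sup>*\<^sup>* u v)"

definition delete_verts :: "('v, 'e) mgraph \<Rightarrow> 'v set \<Rightarrow> ('v, 'e) mgraph" where
  "delete_verts G S = \<lparr>gV = gV G - S, gE = {e \<in> gE G. ends G e \<inter> S = {}}, ends = ends G\<rparr>"

definition delete_edges :: "('v, 'e) mgraph \<Rightarrow> 'e set \<Rightarrow> ('v, 'e) mgraph" where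
  "delete_edges G F = \<lparr>gV = gV G, gE = gE G - F, ends = ends G\<rparr>"

definition k_connected :: "nat \<Rightarrow> ('v, 'e) mgraph \<Rightarrow> bool" where
  "k_connected k G \<longleftrightarrow> card (gV G) > k \<and>
     (\<forall>S. S \<subseteq> gV G \<and> card S < k \<longrightarrow> connected (delete_verts G S))"

definition bipartite :: "('v, 'e) mgraph \<Rightarrow> bool" where
  "bipartite G \<longleftrightarrow> (\<exists>A \<subseteq> gV G. \<forall>e\<in>gE G. card (ends G e \<inter> A) = 1)"

definition perfect_matching :: "('v, 'e) mgraph \<Rightarrow> 'e set \<Rightarrow> bool" where
  "perfect_matching G M \<longleftrightarrow> M \<subseteq> gE G \<and>
     (\<forall>v\<in>gV G. \<exists>!e. e \<in> M \<and> v \<in> ends G e)"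

definition has_perfect_matching :: "('v, 'e) mgraph \<Rightarrow> bool" where
  "has_perfect_matching G \<longleftrightarrow> (\<exists>M. perfect_matching G M)"

definition admissible :: "('v, 'e) mgraph \<Rightarrow> 'e \<Rightarrow> bool" where
  "admissible G e \<longleftrightarrow> (\<exists>M. perfect_matching G M \<and> e \<in> M)"

definition matching_covered :: "('v, 'e) mgraph \<Rightarrow> bool" where
  "matching_covered G \<longleftrightarrow> connected G \<and> card (gV G) \<ge> 2 \<and>
     (\<forall>e\<in>gE G. admissible G e)"

definition brick :: "('v, 'e) mgraph \<Rightarrow> bool" where
  "brick G \<longleftrightarrow> k_connected 3 G \<and> \<not> bipartite G \<and>
     (\<forall>x\<in>gV G. \<forall>y\<in>gV G. x \<noteq> y \<longrightarrow> has_perfect_matching (delete_verts G {x, y}))"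

definition near_bipartite :: "('v, 'e) mgraph \<Rightarrow> bool" where
  "near_bipartite G \<longleftrightarrow> \<not> bipartite G \<and> matching_covered G \<and>
     (\<exists>e1\<in>gE G. \<exists>e2\<in>gE G. e1 \<noteq> e2 \<and>
        bipartite (delete_edges G {e1, e2}) \<and> matching_covered (delete_edges G {e1, e2}))"

definition iso :: "('v, 'e) mgraph \<Rightarrow> ('w, 'f) mgraph \<Rightarrow> bool" where
  "iso G H \<longleftrightarrow> (\<exists>f g. bij_betw f (gV G) (gV H) \<and> bij_betw g (gE G) (gE H) \<and>
     (\<forall>e\<in>gE G. ends H (g e) = f ` ends G e))"

definition iso_at :: "('v, 'e) mgraph \<Rightarrow> 'v \<Rightarrow> ('w, 'f) mgraph \<Rightarrow> 'w \<Rightarrow> bool" where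
  "iso_at G u H u' \<longleftrightarrow> (\<exists>f g. bij_betw f (gV G) (gV H) \<and> bij_betw g (gE G) (gE H) \<and>
     (\<forall>e\<in>gE G. ends H (g e) = f ` ends G e) \<and> f u = u')"

definition cut :: "('v, 'e) mgraph \<Rightarrow> 'v set \<Rightarrow> 'e set" where
  "cut G X = {e \<in> gE G. card (ends G e \<inter> X) = 1}"

text \<open>The vertex representing the contracted set X (a chosen element of X).\<close>
definition rep :: "'v set \<Rightarrow> 'v" where
  "rep X = (SOME x. x \<in> X)"

definition contract :: "('v, 'e) mgraph \<Rightarrow> 'v set \<Rightarrow> ('v, 'e) mgraph" where
  "contract G X = \<lparr>gV = (gV G - X) \<union> {rep X},
                   gE = {e \<in> gE G. \<not> ends G e \<subseteq> X},
                   ends = (\<lambda>e. (\<lambda>w. if w \<in> X then rep X else w) ` ends G e)\<rparr>"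

definition nontrivial_3cut :: "('v, 'e) mgraph \<Rightarrow> 'v set \<Rightarrow> bool" where
  "nontrivial_3cut G X \<longleftrightarrow> X \<subseteq> gV G \<and> card X \<ge> 2 \<and> card (gV G - X) \<ge> 2 \<and>
     card (cut G X) = 3"

text \<open>G is a splicing of H (at u) and K (at v): for some X, G/X is H with the
contraction vertex x corresponding to u, and G/(complement of X) is K with the
contraction vertex corresponding to v.\<close>
definition splicing :: "('v, 'e) mgraph \<Rightarrow> ('w, 'f) mgraph \<Rightarrow> 'w \<Rightarrow>
                        ('x, 'y) mgraph \<Rightarrow> 'x \<Rightarrow> bool" where
  "splicing G H u K v \<longleftrightarrow> (\<exists>X. X \<subseteq> gV G \<and> X \<noteq> {} \<and> gV G - X \<noteq> {} \<and>
     iso_at (contract G X) (rep X) H u \<and>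
     iso_at (contract G (gV G - X)) (rep (gV G - X)) K v)"

definition K4 :: "(nat, nat \<times> nat) mgraph" where
  "K4 = \<lparr>gV = {0..<4}, gE = {(i, j). i < j \<and> j < 4}, ends = (\<lambda>(i, j). {i, j})\<rparr>"

text \<open>Complement of the 6-cycle 0-1-2-3-4-5-0 (the triangular prism).\<close>
definition C6bar :: "(nat, nat \<times> nat) mgraph" where
  "C6bar = \<lparr>gV = {0..<6},
            gE = {(i, j). i < j \<and> j < 6 \<and> j - i \<noteq> 1 \<and> j - i \<noteq> 5},
            ends = (\<lambda>(i, j). {i, j})\<rparr>"

definition dec_step :: "('v, 'e) mgraph list \<Rightarrow> ('v, 'e) mgraph list \<Rightarrow> bool" where
  "dec_step Ls Ls' \<longleftrightarrow> (\<exists>xs H ys X. Ls = xs @ H # ys \<and> nontrivial_3cut H X \<and>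
      Ls' = xs @ contract H X # contract H (gV H - X) # ys)"

definition has_K4_decomposition :: "('v, 'e) mgraph \<Rightarrow> bool" where
  "has_K4_decomposition G \<longleftrightarrow> (\<exists>L. dec_step\<^sup>*\<^sup>* [G] L \<and>
      (\<forall>H\<in>set L. \<not> (\<exists>X. nontrivial_3cut H X)) \<and>
      (\<forall>H\<in>set L. iso H K4))"

definition in_triangle :: "('v, 'e) mgraph \<Rightarrow> 'v \<Rightarrow> bool" where
  "in_triangle G u \<longleftrightarrow> (\<exists>v w. u \<noteq> v \<and> v \<noteq> w \<and> u \<noteq> w \<and>
      adj G u v \<and> adj G v w \<and> adj G u w)"

inductive tri_ladder :: "('v, 'e) mgraph \<Rightarrow> bool" where
  base: "iso G C6bar \<Longrightarrow> tri_ladder G"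
| step: "tri_ladder H \<Longrightarrow> u \<in> gV H \<Longrightarrow> in_triangle H u \<Longrightarrow> v \<in> gV K4 \<Longrightarrow>
         splicing G H u K4 v \<Longrightarrow> tri_ladder G"

end

theory Submission
  imports Defs
begin


lemma rep_in: "X \<noteq> {} \<Longrightarrow> rep X \<in> X"
  unfolding rep_def by (auto intro: someI)

lemma wfD:
  assumes "wf_graph G" "e \<in> gE G"
  shows "ends G e \<subseteq> gV G" "card (ends G e) = 2" "finite (ends G e)"
    "\<exists>p q. p \<noteq> q \<and> ends G e = {p, q}"
proof -
  have a: "ends G e \<subseteq> gV G" "card (ends G e) = 2" using assms unfolding wf_graph_def by auto
  then show "ends G e \<subseteq> gV G" "card (ends G e) = 2" "finite (ends G e)" by (auto intro: card_ge_0_finite)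
  show "\<exists>p q. p \<noteq> q \<and> ends G e = {p, q}" using a(2) unfolding card_2_iff by blast
qed

lemma wf_fin: "wf_graph G \<Longrightarrow> finite (gV G)" "wf_graph G \<Longrightarrow> finite (gE G)"
  unfolding wf_graph_def by auto

lemma contract_simps[simp]:
  "gV (contract G X) = (gV G - X) \<union> {rep X}"
  "gE (contract G X) = {e \<in> gE G. \<not> ends G e \<subseteq> X}"
  "ends (contract G X) e = (\<lambda>w. if w \<in> X then rep X else w) ` ends G e"
  unfolding contract_def by auto

lemma delete_edges_simps[simp]:
  "gV (delete_edges G F) = gV G" "gE (delete_edges G F) = gE G - F"
  "ends (delete_edges G F) = ends G"
  unfolding delete_edges_def by auto

lemma delete_verts_simps[simp]:
  "gV (delete_verts G S) = gV G - S" "gE (delete_verts G S) = {e \<in> gE G. ends G e \<inter> S = {}}"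
  "ends (delete_verts G S) = ends G"
  unfolding delete_verts_def by auto

lemma wf_contract:
  assumes "wf_graph G" "X \<subseteq> gV G" "X \<noteq> {}"
  shows "wf_graph (contract G X)"
proof -
  have r: "rep X \<in> X" using rep_in[OF assms(3)] .
  have "\<forall>e\<in>gE (contract G X). ends (contract G X) e \<subseteq> gV (contract G X) \<and> card (ends (contract G X) e) = 2"
  proof
    fix e assume e: "e \<in> gE (contract G X)"
    then have eE: "e \<in> gE G" and nx: "\<not> ends G e \<subseteq> X" by auto
    obtain p q where pq: "p \<noteq> q" "ends G e = {p, q}" using wfD(4)[OF assms(1) eE] by blast
    have sub: "ends G e \<subseteq> gV G" using wfD(1)[OF assms(1) eE] .
    have s1: "ends (contract G X) e \<subseteq> gV (contract G X)" using sub r by auto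
    have s2: "card (ends (contract G X) e) = 2"
    proof (cases "p \<in> X")
      case True
      then have "q \<notin> X" using nx pq by auto
      then have "ends (contract G X) e = {rep X, q}" using True pq by auto
      then show ?thesis using \<open>q \<notin> X\<close> r by (metis card_2_iff)
    next
      case False
      show ?thesis
      proof (cases "q \<in> X")
        case True
        then have "ends (contract G X) e = {p, rep X}" using False pq by auto
        then show ?thesis using False r by (metis card_2_iff)
      next
        case F2: False
        then have "ends (contract G X) e = {p, q}" using False pq by auto
        then show ?thesis using pq by (metis card_2_iff)
      qed
    qed
    show "ends (contract G X) e \<subseteq> gV (contract G X) \<and> card (ends (contract G X) e) = 2"
      using s1 s2 by blast
  qed
  then show ?thesis unfolding wf_graph_def using wf_fin[OF assms(1)] by simp
qed

definition isom :: "('v, 'e) mgraph \<Rightarrow> ('w, 'f) mgraph \<Rightarrow> ('v \<Rightarrow> 'w) \<Rightarrow> ('e \<Rightarrow> 'f) \<Rightarrow> bool" where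
  "isom G H f g \<longleftrightarrow> bij_betw f (gV G) (gV H) \<and> bij_betw g (gE G) (gE H) \<and>
     (\<forall>e\<in>gE G. ends H (g e) = f ` ends G e)"

lemma iso_isom: "iso G H \<longleftrightarrow> (\<exists>f g. isom G H f g)"
  unfolding iso_def isom_def by auto

lemma iso_at_isom: "iso_at G u H u' \<longleftrightarrow> (\<exists>f g. isom G H f g \<and> f u = u')"
  unfolding iso_at_def isom_def by auto

lemma bij_obtain: "bij_betw g A B \<Longrightarrow> b \<in> B \<Longrightarrow> (\<And>a. a \<in> A \<Longrightarrow> b = g a \<Longrightarrow> P) \<Longrightarrow> P"
  unfolding bij_betw_def by auto

lemma isom_refl: "isom G G id id"
  unfolding isom_def by auto

lemma iso_refl: "iso G G"
  using isom_refl iso_isom by blast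

lemma isom_trans: "isom G H f g \<Longrightarrow> isom H K f' g' \<Longrightarrow> isom G K (f' \<circ> f) (g' \<circ> g)"
  unfolding isom_def
  by (auto intro: bij_betw_trans simp: image_comp bij_betw_apply)

lemma iso_trans: "iso G H \<Longrightarrow> iso H K \<Longrightarrow> iso G K"
  using isom_trans iso_isom by metis

lemma isom_sym:
  assumes "wf_graph G" "isom G H f g"
  shows "isom H G (inv_into (gV G) f) (inv_into (gE G) g)"
proof -
  have bf: "bij_betw f (gV G) (gV H)" and bg: "bij_betw g (gE G) (gE H)"
    and en: "\<forall>e\<in>gE G. ends H (g e) = f ` ends G e" using assms(2) unfolding isom_def by auto
  have "ends G (inv_into (gE G) g e') = inv_into (gV G) f ` ends H e'" if e'H: "e' \<in> gE H" for e'
  proof -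
    obtain e where e: "e \<in> gE G" "e' = g e" using bij_obtain[OF bg e'H] by blast
    have i: "inv_into (gE G) g e' = e" using e bg inv_into_f_f[of g "gE G" e] by (simp add: bij_betw_def)
    have "inv_into (gV G) f ` ends H e' = inv_into (gV G) f ` f ` ends G e" using en e by simp
    also have "\<dots> = ends G e"
      using inv_into_image_cancel[of f "gV G" "ends G e"] bf wfD(1)[OF assms(1) e(1)]
      by (simp add: bij_betw_def)
    finally show ?thesis using i by simp
  qed
  moreover have "bij_betw (inv_into (gV G) f) (gV H) (gV G)" using bf by (rule bij_betw_inv_into)
  moreover have "bij_betw (inv_into (gE G) g) (gE H) (gE G)" using bg by (rule bij_betw_inv_into)
  ultimately show ?thesis unfolding isom_def by simp
qed

lemma iso_sym: "wf_graph G \<Longrightarrow> iso G H \<Longrightarrow> iso H G"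
  using isom_sym iso_isom by metis

lemma isom_wf:
  assumes "wf_graph G" "isom G H f g"
  shows "wf_graph H"
proof -
  have bf: "bij_betw f (gV G) (gV H)" and bg: "bij_betw g (gE G) (gE H)"
    and en: "\<forall>e\<in>gE G. ends H (g e) = f ` ends G e" using assms(2) unfolding isom_def by auto
  have f1: "finite (gV H)" using bf wf_fin[OF assms(1)] bij_betw_finite by blast
  have f2: "finite (gE H)" using bg wf_fin[OF assms(1)] bij_betw_finite by blast
  have "\<forall>e'\<in>gE H. ends H e' \<subseteq> gV H \<and> card (ends H e') = 2"
  proof
    fix e' assume "e' \<in> gE H"
    then have "e' \<in> gE H" by auto
    then obtain e where e: "e \<in> gE G" "e' = g e" using bij_obtain[OF bg] by metis
    have s: "ends G e \<subseteq> gV G" "card (ends G e) = 2" using wfD[OF assms(1) e(1)] by auto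
    have "inj_on f (ends G e)" using bf s(1) by (auto simp: bij_betw_def intro: inj_on_subset)
    moreover have "f ` ends G e \<subseteq> gV H" using s(1) bf by (auto simp: bij_betw_def)
    ultimately show "ends H e' \<subseteq> gV H \<and> card (ends H e') = 2"
      using en e s by (auto simp: card_image)
  qed
  then show ?thesis unfolding wf_graph_def using f1 f2 by simp
qed

lemma isom_card: "isom G H f g \<Longrightarrow> card (gV G) = card (gV H)"
  unfolding isom_def using bij_betw_same_card by blast

lemma isom_adj:
  assumes "wf_graph G" "isom G H f g" "u \<in> gV G" "v \<in> gV G"
  shows "adj H (f u) (f v) \<longleftrightarrow> adj G u v"
proof -
  have bf: "bij_betw f (gV G) (gV H)" and bg: "bij_betw g (gE G) (gE H)"
    and en: "\<forall>e\<in>gE G. ends H (g e) = f ` ends G e" using assms(2) unfolding isom_def by auto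
  have inj: "inj_on f (gV G)" using bf by (simp add: bij_betw_def)
  show ?thesis
  proof
    assume "adj H (f u) (f v)"
    then obtain e' where e': "e' \<in> gE H" "ends H e' = {f u, f v}" unfolding adj_def by auto
    obtain e where e: "e \<in> gE G" "e' = g e" using bij_obtain[OF bg e'(1)] by blast
    have s: "ends G e \<subseteq> gV G" using wfD[OF assms(1) e(1)] by auto
    have "f ` ends G e = f ` {u, v}" using en e e' by auto
    then have "ends G e = {u, v}" using inj_on_image_eq_iff[OF inj s, of "{u,v}"] assms(3,4) by auto
    then show "adj G u v" unfolding adj_def using e by auto
  next
    assume "adj G u v"
    then obtain e where "e \<in> gE G" "ends G e = {u, v}" unfolding adj_def by auto
    then show "adj H (f u) (f v)" unfolding adj_def using en bg
      by (intro bexI[of _ "g e"]) (auto simp: bij_betw_def)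
  qed
qed

lemma isom_degree:
  assumes "wf_graph G" "isom G H f g" "v \<in> gV G"
  shows "degree H (f v) = degree G v"
proof -
  have bf: "bij_betw f (gV G) (gV H)" and bg: "bij_betw g (gE G) (gE H)"
    and en: "\<forall>e\<in>gE G. ends H (g e) = f ` ends G e" using assms(2) unfolding isom_def by auto
  have inj: "inj_on f (gV G)" using bf by (simp add: bij_betw_def)
  have img: "g ` {e \<in> gE G. v \<in> ends G e} = {e' \<in> gE H. f v \<in> ends H e'}"
  proof (intro equalityI subsetI)
    fix e' assume "e' \<in> g ` {e \<in> gE G. v \<in> ends G e}"
    then show "e' \<in> {e' \<in> gE H. f v \<in> ends H e'}" using en bg by (auto simp: bij_betw_def)
  next
    fix e' assume a: "e' \<in> {e' \<in> gE H. f v \<in> ends H e'}"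
    then have "e' \<in> gE H" by auto
    then obtain e where e: "e \<in> gE G" "e' = g e" using bij_obtain[OF bg] by metis
    have s: "ends G e \<subseteq> gV G" using wfD[OF assms(1) e(1)] by auto
    have "f v \<in> f ` ends G e" using a en e by auto
    then have "v \<in> ends G e" using inj s assms(3) by (auto dest: inj_onD)
    then show "e' \<in> g ` {e \<in> gE G. v \<in> ends G e}" using e by auto
  qed
  have "inj_on g {e \<in> gE G. v \<in> ends G e}" using bg by (auto simp: bij_betw_def intro: inj_on_subset)
  then show ?thesis unfolding degree_def using img card_image by metis
qed

lemma isom_cut:
  assumes "wf_graph G" "isom G H f g" "X \<subseteq> gV G"
  shows "g ` cut G X = cut H (f ` X)" "card (cut H (f ` X)) = card (cut G X)"
proof -
  have bf: "bij_betw f (gV G) (gV H)" and bg: "bij_betw g (gE G) (gE H)"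
    and en: "\<forall>e\<in>gE G. ends H (g e) = f ` ends G e" using assms(2) unfolding isom_def by auto
  have inj: "inj_on f (gV G)" using bf by (simp add: bij_betw_def)
  have key: "card (ends H (g e) \<inter> f ` X) = card (ends G e \<inter> X)" if "e \<in> gE G" for e
  proof -
    have s: "ends G e \<subseteq> gV G" using wfD[OF assms(1) that] by auto
    have "ends H (g e) \<inter> f ` X = f ` (ends G e \<inter> X)"
      using en that inj_on_image_Int[OF inj s assms(3)] by simp
    moreover have "inj_on f (ends G e \<inter> X)" using inj s by (auto intro: inj_on_subset)
    ultimately show ?thesis by (simp add: card_image)
  qed
  show img: "g ` cut G X = cut H (f ` X)"
  proof (intro equalityI subsetI)
    fix e' assume "e' \<in> g ` cut G X"
    then show "e' \<in> cut H (f ` X)" using key bg unfolding cut_def by (auto simp: bij_betw_def)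
  next
    fix e' assume a: "e' \<in> cut H (f ` X)"
    then have "e' \<in> gE H" unfolding cut_def by auto
    then obtain e where e: "e \<in> gE G" "e' = g e" using bij_obtain[OF bg] by metis
    then show "e' \<in> g ` cut G X" using a key unfolding cut_def by auto
  qed
  have "inj_on g (cut G X)" using bg unfolding cut_def by (auto simp: bij_betw_def intro: inj_on_subset)
  then show "card (cut H (f ` X)) = card (cut G X)" using img card_image by metis
qed


lemma isom_contract:
  assumes wf: "wf_graph G" and im: "isom G H f g" and X: "X \<subseteq> gV G" "X \<noteq> {}"
  shows "isom (contract G X) (contract H (f ` X)) (\<lambda>w. if w \<in> X then rep (f ` X) else f w) g"
proof -
  have bf: "bij_betw f (gV G) (gV H)" and bg: "bij_betw g (gE G) (gE H)"
    and en: "\<forall>e\<in>gE G. ends H (g e) = f ` ends G e" using im unfolding isom_def by auto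
  have inj: "inj_on f (gV G)" and fV: "f ` gV G = gV H" using bf by (auto simp: bij_betw_def)
  define F where "F = (\<lambda>w. if w \<in> X then rep (f ` X) else f w)"
  have rX: "rep X \<in> X" using rep_in[OF X(2)] .
  have fX: "f ` X \<noteq> {}" using X(2) by auto
  have rfX: "rep (f ` X) \<in> f ` X" using rep_in[OF fX] .
  have memX: "f w \<in> f ` X \<longleftrightarrow> w \<in> X" if "w \<in> gV G" for w
    using inj_on_image_mem_iff[OF inj that X(1)] .
  have img1: "f ` (gV G - X) = gV H - f ` X" using inj_on_image_set_diff[OF inj _ X(1)] fV by simp
  have bF: "bij_betw F ((gV G - X) \<union> {rep X}) ((gV H - f ` X) \<union> {rep (f ` X)})"
    unfolding bij_betw_def
  proof
    show "inj_on F (gV G - X \<union> {rep X})"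
    proof (rule inj_onI)
      fix u v assume u: "u \<in> gV G - X \<union> {rep X}" and v: "v \<in> gV G - X \<union> {rep X}" and e: "F u = F v"
      show "u = v"
      proof (cases "u \<in> X")
        case True
        then have "u = rep X" using u by auto
        show ?thesis
        proof (cases "v \<in> X")
          case True then show ?thesis using v \<open>u = rep X\<close> by auto
        next
          case False
          then have Fv: "F v = f v" and vV: "v \<in> gV G" using v rX by (auto simp: F_def)
          have Fu: "F u = rep (f ` X)" using True by (simp add: F_def)
          have "f v \<notin> f ` X" using memX[OF vV] False by simp
          then show ?thesis using e Fv Fu rfX by simp
        qed
      next
        case False
        then have fu: "F u = f u" "u \<in> gV G" using u rX by (auto simp: F_def)
        show ?thesis
        proof (cases "v \<in> X")
          case True
          then have Fv: "F v = rep (f ` X)" by (simp add: F_def)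
          have "f u \<notin> f ` X" using memX[OF fu(2)] False by simp
          then show ?thesis using e Fv fu rfX by simp
        next
          case F2: False
          then have "F v = f v" "v \<in> gV G" using v rX by (auto simp: F_def)
          then show ?thesis using e fu inj inj_onD[OF inj] by metis
        qed
      qed
    qed
    have "F ` (gV G - X) = f ` (gV G - X)" by (auto simp: F_def)
    moreover have "F (rep X) = rep (f ` X)" using rX by (simp add: F_def)
    ultimately show "F ` (gV G - X \<union> {rep X}) = gV H - f ` X \<union> {rep (f ` X)}" using img1 by auto
  qed
  have sub_iff: "f ` ends G e \<subseteq> f ` X \<longleftrightarrow> ends G e \<subseteq> X" if "e \<in> gE G" for e
    using wfD(1)[OF wf that] memX by blast
  have bg2: "bij_betw g {e \<in> gE G. \<not> ends G e \<subseteq> X} {e' \<in> gE H. \<not> ends H e' \<subseteq> f ` X}"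
    unfolding bij_betw_def
  proof
    show "inj_on g {e \<in> gE G. \<not> ends G e \<subseteq> X}" using bg by (auto simp: bij_betw_def intro: inj_on_subset)
    show "g ` {e \<in> gE G. \<not> ends G e \<subseteq> X} = {e' \<in> gE H. \<not> ends H e' \<subseteq> f ` X}"
    proof (intro equalityI subsetI)
      fix e' assume "e' \<in> g ` {e \<in> gE G. \<not> ends G e \<subseteq> X}"
      then obtain e where e: "e \<in> gE G" "\<not> ends G e \<subseteq> X" "e' = g e" by auto
      then show "e' \<in> {e' \<in> gE H. \<not> ends H e' \<subseteq> f ` X}"
        using sub_iff en bg by (auto simp: bij_betw_def)
    next
      fix e' assume a: "e' \<in> {e' \<in> gE H. \<not> ends H e' \<subseteq> f ` X}"
      then have "e' \<in> gE H" by auto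
      then obtain e where e: "e \<in> gE G" "e' = g e" using bij_obtain[OF bg] by metis
      then show "e' \<in> g ` {e \<in> gE G. \<not> ends G e \<subseteq> X}" using a sub_iff en by auto
    qed
  qed
  have ends2: "(\<lambda>w. if w \<in> f ` X then rep (f ` X) else w) ` ends H (g e)
      = F ` (\<lambda>w. if w \<in> X then rep X else w) ` ends G e" if "e \<in> gE G" for e
  proof -
    have s: "ends G e \<subseteq> gV G" using wfD(1)[OF wf that] .
    have "(\<lambda>w. if w \<in> f ` X then rep (f ` X) else w) ` ends H (g e)
        = (\<lambda>w. if f w \<in> f ` X then rep (f ` X) else f w) ` ends G e"
    proof -
      have "ends H (g e) = f ` ends G e" using en that by blast
      then show ?thesis by (simp only: image_image)
    qed
    also have "\<dots> = (\<lambda>w. F (if w \<in> X then rep X else w)) ` ends G e"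
    proof (rule image_cong[OF refl])
      fix w assume "w \<in> ends G e"
      then have "w \<in> gV G" using s by auto
      then show "(if f w \<in> f ` X then rep (f ` X) else f w) = F (if w \<in> X then rep X else w)"
        using memX rX by (auto simp: F_def)
    qed
    also have "\<dots> = F ` (\<lambda>w. if w \<in> X then rep X else w) ` ends G e" by (simp only: image_image)
    finally show ?thesis .
  qed
  have E3: "\<forall>e\<in>gE (contract G X). ends (contract H (f ` X)) (g e) = F ` ends (contract G X) e"
    using ends2 by simp
  have "isom (contract G X) (contract H (f ` X)) F g"
    unfolding isom_def using bF bg2 E3 by simp
  then show ?thesis unfolding F_def .
qed

lemma iso_contract:
  assumes "wf_graph G" "isom G H f g" "X \<subseteq> gV G" "X \<noteq> {}"
  shows "iso (contract G X) (contract H (f ` X))"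
  using isom_contract[OF assms] iso_isom by blast

lemma less4: "(j::nat) < 4 \<longleftrightarrow> j=0 \<or> j=1 \<or> j=2 \<or> j=3" by auto

lemma K4_E: "gE K4 = {(0,1),(0,2),(0,3),(1,2),(1,3),(2,3)}"
  unfolding K4_def by (auto simp: less4)

lemma K4_V: "gV K4 = {0..<4}" unfolding K4_def by simp

lemma K4_ends: "ends K4 (i, j) = {i, j}" unfolding K4_def by simp

lemma K4_ends': "ends K4 e = {fst e, snd e}" unfolding K4_def by (simp add: case_prod_beta)

lemma wf_K4: "wf_graph K4"
  unfolding wf_graph_def K4_E K4_V by (simp add: K4_ends)

lemma card_K4: "card (gV K4) = 4" by (simp add: K4_V)

lemma K4_adj: "adj K4 i j \<longleftrightarrow> i \<noteq> j \<and> i < 4 \<and> j < 4"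
proof
  assume "adj K4 i j"
  then obtain e where e: "e \<in> gE K4" "ends K4 e = {i, j}" unfolding adj_def by blast
  have "fst e < snd e" "snd e < 4" using e(1) unfolding K4_def by auto
  moreover have "{fst e, snd e} = {i, j}" using e(2) K4_ends' by metis
  ultimately show "i \<noteq> j \<and> i < 4 \<and> j < 4" by (auto simp: doubleton_eq_iff)
next
  assume a: "i \<noteq> j \<and> i < 4 \<and> j < 4"
  show "adj K4 i j" unfolding adj_def
  proof (cases "i < j")
    case True then show "\<exists>e\<in>gE K4. ends K4 e = {i, j}" using a
      by (intro bexI[of _ "(i,j)"]) (auto simp: K4_def)
  next
    case False then have "(j, i) \<in> gE K4" "ends K4 (j,i) = {i,j}" using a by (auto simp: K4_def)
    then show "\<exists>e\<in>gE K4. ends K4 e = {i, j}" by blast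
  qed
qed

lemma K4_degree: "v \<in> gV K4 \<Longrightarrow> degree K4 v = 3"
proof -
  assume "v \<in> gV K4"
  then have "v = 0 \<or> v = 1 \<or> v = 2 \<or> v = 3" by (auto simp: K4_V)
  moreover have "{e \<in> gE K4. 0 \<in> ends K4 e} = {(0,1),(0,2),(0,3)}" by (auto simp: K4_E K4_ends)
  moreover have "{e \<in> gE K4. 1 \<in> ends K4 e} = {(0,1),(1,2),(1,3)}" by (auto simp: K4_E K4_ends)
  moreover have "{e \<in> gE K4. 2 \<in> ends K4 e} = {(0,2),(1,2),(2,3)}" by (auto simp: K4_E K4_ends)
  moreover have "{e \<in> gE K4. 3 \<in> ends K4 e} = {(0,3),(1,3),(2,3)}" by (auto simp: K4_E K4_ends)
  ultimately show ?thesis unfolding degree_def by (elim disjE) simp_all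
qed

lemma card_ge2_obtain:
  assumes "card A \<ge> 2" obtains p q where "p \<in> A" "q \<in> A" "p \<noteq> q"
proof -
  have fin: "finite A" using assms by (metis card.infinite not_numeral_le_zero)
  have "\<not> card A \<le> Suc 0" using assms by simp
  then have "\<not> (\<forall>a\<in>A. \<forall>b\<in>A. a = b)" using card_le_Suc0_iff_eq[OF fin] by simp
  then show ?thesis using that by blast
qed

lemma complete_no_3cut:
  assumes wf: "wf_graph H" and c4: "card (gV H) = 4" and cpl: "\<forall>u\<in>gV H. \<forall>v\<in>gV H. u \<noteq> v \<longrightarrow> adj H u v"
  shows "\<not> nontrivial_3cut H X"
proof
  assume nt: "nontrivial_3cut H X"
  then have XV: "X \<subseteq> gV H" and cX: "card X \<ge> 2" and cY: "card (gV H - X) \<ge> 2"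
    and c3: "card (cut H X) = 3" unfolding nontrivial_3cut_def by auto
  have fin: "finite (gV H)" using wf_fin(1)[OF wf] .
  obtain p q where pq: "p \<in> X" "q \<in> X" "p \<noteq> q" using card_ge2_obtain[OF cX] by blast
  obtain r s where rs: "r \<in> gV H - X" "s \<in> gV H - X" "r \<noteq> s" using card_ge2_obtain[OF cY] by blast
  have inc: "e \<in> cut H X" if "e \<in> gE H" "ends H e = {a, b}" "a \<in> X" "b \<notin> X" for e a b
  proof -
    have "ends H e \<inter> X = {a}" using that by auto
    then show ?thesis unfolding cut_def using that by auto
  qed
  have A: "\<exists>e\<in>gE H. ends H e = {u, v}" if "u \<in> gV H" "v \<in> gV H" "u \<noteq> v" for u v
    using cpl that unfolding adj_def by blast
  have pV: "p \<in> gV H" "q \<in> gV H" using pq XV by auto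
  have rV: "r \<in> gV H" "s \<in> gV H" "r \<notin> X" "s \<notin> X" using rs by auto
  have ne: "p \<noteq> r" "p \<noteq> s" "q \<noteq> r" "q \<noteq> s" using pq rV by auto
  obtain e1 where e1: "e1 \<in> gE H" "ends H e1 = {p, r}" using A[OF pV(1) rV(1) ne(1)] by blast
  obtain e2 where e2: "e2 \<in> gE H" "ends H e2 = {p, s}" using A[OF pV(1) rV(2) ne(2)] by blast
  obtain e3 where e3: "e3 \<in> gE H" "ends H e3 = {q, r}" using A[OF pV(2) rV(1) ne(3)] by blast
  obtain e4 where e4: "e4 \<in> gE H" "ends H e4 = {q, s}" using A[OF pV(2) rV(2) ne(4)] by blast
  have sub: "{e1, e2, e3, e4} \<subseteq> cut H X" using inc[OF e1] inc[OF e2] inc[OF e3] inc[OF e4] pq rV by auto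
  have dist: "e1 \<noteq> e2" "e1 \<noteq> e3" "e1 \<noteq> e4" "e2 \<noteq> e3" "e2 \<noteq> e4" "e3 \<noteq> e4"
    using e1(2) e2(2) e3(2) e4(2) pq(3) rs(3) ne by (auto simp: doubleton_eq_iff)
  have c4: "card {e1, e2, e3, e4} = 4" using dist by auto
  have fc: "finite (cut H X)" using wf_fin(2)[OF wf] unfolding cut_def by auto
  have "card {e1, e2, e3, e4} \<le> card (cut H X)" using card_mono[OF fc sub] .
  then have "card (cut H X) \<ge> 4" using c4 by simp
  then show False using c3 by simp
qed

lemma iso_K4_complete:
  assumes wf: "wf_graph H" and i: "iso H K4"
  shows "card (gV H) = 4" "\<forall>u\<in>gV H. \<forall>v\<in>gV H. u \<noteq> v \<longrightarrow> adj H u v"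
proof -
  obtain f g where im: "isom H K4 f g" using i iso_isom by blast
  show "card (gV H) = 4" using isom_card[OF im] card_K4 by simp
  have bf: "bij_betw f (gV H) (gV K4)" using im unfolding isom_def by auto
  show "\<forall>u\<in>gV H. \<forall>v\<in>gV H. u \<noteq> v \<longrightarrow> adj H u v"
  proof (intro ballI impI)
    fix u v assume uv: "u \<in> gV H" "v \<in> gV H" "u \<noteq> v"
    then have "f u \<noteq> f v" "f u \<in> gV K4" "f v \<in> gV K4" using bf by (auto simp: bij_betw_def dest: inj_onD)
    then have "adj K4 (f u) (f v)" by (auto simp: K4_adj K4_V)
    then show "adj H u v" using isom_adj[OF wf im uv(1,2)] by simp
  qed
qed

lemma iso_K4_no_3cut: "wf_graph H \<Longrightarrow> iso H K4 \<Longrightarrow> \<not> nontrivial_3cut H X"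
  using complete_no_3cut iso_K4_complete by metis


lemma cut_compl:
  assumes wf: "wf_graph G" and X: "X \<subseteq> gV G"
  shows "cut G (gV G - X) = cut G X"
proof (rule set_eqI)
  fix e
  show "e \<in> cut G (gV G - X) \<longleftrightarrow> e \<in> cut G X"
  proof (cases "e \<in> gE G")
    case True
    have s: "ends G e \<subseteq> gV G" "card (ends G e) = 2" "finite (ends G e)" using wfD[OF wf True] by auto
    have "ends G e \<inter> (gV G - X) = ends G e - (ends G e \<inter> X)" using s by auto
    then have "card (ends G e \<inter> (gV G - X)) = 2 - card (ends G e \<inter> X)"
      using s card_Diff_subset[of "ends G e \<inter> X" "ends G e"] by (simp add: finite_subset)
    moreover have "card (ends G e \<inter> X) \<le> 2" using s card_mono[of "ends G e" "ends G e \<inter> X"] by simp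
    ultimately show ?thesis unfolding cut_def using True by auto
  next
    case False then show ?thesis unfolding cut_def by auto
  qed
qed

lemma nt_compl:
  assumes wf: "wf_graph G" and nt: "nontrivial_3cut G X"
  shows "nontrivial_3cut G (gV G - X)"
proof -
  have X: "X \<subseteq> gV G" using nt unfolding nontrivial_3cut_def by auto
  have d: "gV G - (gV G - X) = X" using X by auto
  show ?thesis using nt cut_compl[OF wf X] d unfolding nontrivial_3cut_def by auto
qed

lemma contract_compl_compl: "X \<subseteq> gV G \<Longrightarrow> contract G (gV G - (gV G - X)) = contract G X"
  by (simp add: double_diff)

lemma card_contract:
  assumes "finite (gV G)" "X \<subseteq> gV G" "X \<noteq> {}"
  shows "card (gV (contract G X)) = card (gV G - X) + 1"
proof -
  have "rep X \<notin> gV G - X" using rep_in[OF assms(3)] by auto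
  then show ?thesis using assms(1) by simp
qed

lemma nt_cards:
  assumes wf: "wf_graph G" and nt: "nontrivial_3cut G X"
  shows "card (gV (contract G X)) < card (gV G)" "card (gV (contract G (gV G - X))) < card (gV G)"
    "card (gV (contract G X)) + card (gV (contract G (gV G - X))) = card (gV G) + 2"
proof -
  have X: "X \<subseteq> gV G" "card X \<ge> 2" "card (gV G - X) \<ge> 2" using nt unfolding nontrivial_3cut_def by auto
  have fin: "finite (gV G)" using wf_fin(1)[OF wf] .
  have Xne: "X \<noteq> {}" using X(2) by (intro notI) simp
  have Yne: "gV G - X \<noteq> {}" using X(3) by (intro notI) simp
  have c1: "card (gV (contract G X)) = card (gV G - X) + 1" using card_contract[OF fin X(1) Xne] .
  have c2: "card (gV (contract G (gV G - X))) = card (gV G - (gV G - X)) + 1"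
    using card_contract[OF fin _ Yne] by auto
  have d: "gV G - (gV G - X) = X" using X(1) by auto
  have cs: "card (gV G) = card X + card (gV G - X)"
    using card_Diff_subset[OF finite_subset[OF X(1) fin] X(1)] card_mono[OF fin X(1)] by simp
  show "card (gV (contract G X)) < card (gV G)" using c1 cs X(2) by simp
  show "card (gV (contract G (gV G - X))) < card (gV G)" using c2 d cs X(3) by simp
  show "card (gV (contract G X)) + card (gV (contract G (gV G - X))) = card (gV G) + 2"
    using c1 c2 d cs by simp
qed

lemma nt_wf_sides:
  assumes wf: "wf_graph G" and nt: "nontrivial_3cut G X"
  shows "wf_graph (contract G X)" "wf_graph (contract G (gV G - X))"
proof -
  have X: "X \<subseteq> gV G" "card X \<ge> 2" "card (gV G - X) \<ge> 2" using nt unfolding nontrivial_3cut_def by auto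
  have Xne: "X \<noteq> {}" using X(2) by (intro notI) simp
  have Yne: "gV G - X \<noteq> {}" using X(3) by (intro notI) simp
  show "wf_graph (contract G X)" using wf_contract[OF wf X(1) Xne] .
  show "wf_graph (contract G (gV G - X))" using wf_contract[OF wf _ Yne] by blast
qed

inductive K4D :: "('v, 'e) mgraph \<Rightarrow> bool" where
  base: "wf_graph G \<Longrightarrow> iso G K4 \<Longrightarrow> K4D G"
| step: "wf_graph G \<Longrightarrow> nontrivial_3cut G X \<Longrightarrow> K4D (contract G X) \<Longrightarrow>
         K4D (contract G (gV G - X)) \<Longrightarrow> K4D G"

lemma K4D_wf: "K4D G \<Longrightarrow> wf_graph G"
  by (induction rule: K4D.induct) auto

lemma K4D_card: "K4D G \<Longrightarrow> card (gV G) \<ge> 4"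
proof (induction rule: K4D.induct)
  case (base G) then show ?case using iso_K4_complete(1) by fastforce
next
  case (step G X) then show ?case using nt_cards(3)[OF step(1,2)] by simp
qed

lemma K4D_card4: "K4D G \<Longrightarrow> card (gV G) = 4 \<Longrightarrow> iso G K4"
proof (induction rule: K4D.induct)
  case (base G) then show ?case by simp
next
  case (step G X) then show ?case using nt_cards(3)[OF step(1,2)] K4D_card[OF step(3)] K4D_card[OF step(4)] by simp
qed

subsection \<open>Decomposition sequences\<close>

lemma dec_step_ctx: "dec_step Ls Ls' \<Longrightarrow> dec_step (xs @ Ls @ ys) (xs @ Ls' @ ys)"
proof -
  assume "dec_step Ls Ls'"
  then obtain a H b X where "Ls = a @ H # b" "nontrivial_3cut H X"
    "Ls' = a @ contract H X # contract H (gV H - X) # b" unfolding dec_step_def by blast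
  then show ?thesis unfolding dec_step_def
    by (intro exI[of _ "xs @ a"] exI[of _ H] exI[of _ "b @ ys"] exI[of _ X]) simp
qed

lemma dec_ctx: "dec_step\<^sup>*\<^sup>* Ls Ls' \<Longrightarrow> dec_step\<^sup>*\<^sup>* (xs @ Ls @ ys) (xs @ Ls' @ ys)"
proof (induction rule: rtranclp_induct)
  case base then show ?case by simp
next
  case (step y z) then show ?case using dec_step_ctx rtranclp.rtrancl_into_rtrancl by metis
qed

lemma dec_split:
  "dec_step\<^sup>*\<^sup>* M L \<Longrightarrow> M = xs @ ys \<Longrightarrow>
   \<exists>L1 L2. L = L1 @ L2 \<and> dec_step\<^sup>*\<^sup>* xs L1 \<and> dec_step\<^sup>*\<^sup>* ys L2"
proof (induction L rule: rtranclp_induct)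
  case base then show ?case by blast
next
  case (step M' L')
  then obtain M1 M2 where M: "M' = M1 @ M2" "dec_step\<^sup>*\<^sup>* xs M1" "dec_step\<^sup>*\<^sup>* ys M2" by blast
  obtain a H b X where d: "M' = a @ H # b" "nontrivial_3cut H X"
    "L' = a @ contract H X # contract H (gV H - X) # b" using step(2) unfolding dec_step_def by blast
  have "M1 @ M2 = a @ (H # b)" using M(1) d(1) by simp
  then obtain us where us: "(M1 = a @ us \<and> us @ M2 = H # b) \<or> (M1 @ us = a \<and> M2 = us @ H # b)"
    unfolding append_eq_append_conv2 by blast
  then show ?case
  proof
    assume u: "M1 = a @ us \<and> us @ M2 = H # b"
    show ?case
    proof (cases us)
      case Nil
      then have "M2 = H # b" "M1 = a" using u by auto
      then have "dec_step M2 (contract H X # contract H (gV H - X) # b)"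
        unfolding dec_step_def using d(2) by (intro exI[of _ "[]"]) auto
      then show ?thesis using M \<open>M1 = a\<close> d(3)
        by (intro exI[of _ M1] exI[of _ "contract H X # contract H (gV H - X) # b"]) auto
    next
      case (Cons u us')
      then have "u = H" "b = us' @ M2" "M1 = a @ H # us'" using u by auto
      then have "dec_step M1 (a @ contract H X # contract H (gV H - X) # us')"
        unfolding dec_step_def using d(2) by blast
      then show ?thesis using M \<open>b = us' @ M2\<close> d(3)
        by (intro exI[of _ "a @ contract H X # contract H (gV H - X) # us'"] exI[of _ M2]) auto
    qed
  next
    assume u: "M1 @ us = a \<and> M2 = us @ H # b"
    then have "dec_step M2 (us @ contract H X # contract H (gV H - X) # b)"
      unfolding dec_step_def using d(2) by blast
    then show ?case using M u d(3)
      by (intro exI[of _ M1] exI[of _ "us @ contract H X # contract H (gV H - X) # b"]) auto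
  qed
qed

lemma dec_single: "dec_step [G] M \<Longrightarrow> \<exists>X. nontrivial_3cut G X \<and> M = [contract G X, contract G (gV G - X)]"
  unfolding dec_step_def by (auto simp: Cons_eq_append_conv)

definition final_list :: "('v, 'e) mgraph list \<Rightarrow> bool" where
  "final_list L \<longleftrightarrow> (\<forall>H\<in>set L. \<not> (\<exists>X. nontrivial_3cut H X)) \<and> (\<forall>H\<in>set L. iso H K4)"

lemma has_dec_iff: "has_K4_decomposition G \<longleftrightarrow> (\<exists>L. dec_step\<^sup>*\<^sup>* [G] L \<and> final_list L)"
  unfolding has_K4_decomposition_def final_list_def by simp

lemma final_append: "final_list (L1 @ L2) \<longleftrightarrow> final_list L1 \<and> final_list L2"
  unfolding final_list_def by auto

lemma K4D_imp_dec: "K4D G \<Longrightarrow> \<exists>L. dec_step\<^sup>*\<^sup>* [G] L \<and> final_list L"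
proof (induction rule: K4D.induct)
  case (base G)
  then show ?case using iso_K4_no_3cut[OF base(1,2)]
    by (intro exI[of _ "[G]"]) (auto simp: final_list_def)
next
  case (step G X)
  obtain L1 where L1: "dec_step\<^sup>*\<^sup>* [contract G X] L1" "final_list L1" using step.IH(1) by blast
  obtain L2 where L2: "dec_step\<^sup>*\<^sup>* [contract G (gV G - X)] L2" "final_list L2" using step.IH(2) by blast
  have s1: "dec_step [G] [contract G X, contract G (gV G - X)]"
    unfolding dec_step_def using step(2) by (intro exI[of _ "[]"]) auto
  have s2: "dec_step\<^sup>*\<^sup>* ([] @ [contract G X] @ [contract G (gV G - X)]) ([] @ L1 @ [contract G (gV G - X)])"
    by (rule dec_ctx[OF L1(1)])
  have s3: "dec_step\<^sup>*\<^sup>* (L1 @ [contract G (gV G - X)] @ []) (L1 @ L2 @ [])"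
    by (rule dec_ctx[OF L2(1)])
  have "dec_step\<^sup>*\<^sup>* [G] (L1 @ L2)" using s1 s2 s3 by simp
  then show ?case using L1(2) L2(2) final_append by blast
qed

lemma dec_imp_K4D:
  "wf_graph G \<Longrightarrow> dec_step\<^sup>*\<^sup>* [G] L \<Longrightarrow> final_list L \<Longrightarrow> K4D G"
proof (induction "card (gV G)" arbitrary: G L rule: less_induct)
  case less
  show ?case
  using less(3)
  proof (cases rule: converse_rtranclpE)
    case base
    then have "iso G K4" using less(4) unfolding final_list_def by auto
    then show ?thesis using K4D.base less(2) by blast
  next
    case (step M)
    then obtain X where X: "nontrivial_3cut G X" "M = [contract G X, contract G (gV G - X)]"
      using dec_single by blast
    then obtain L1 L2 where L: "L = L1 @ L2" "dec_step\<^sup>*\<^sup>* [contract G X] L1"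
      "dec_step\<^sup>*\<^sup>* [contract G (gV G - X)] L2"
      using dec_split[OF step(2), of "[contract G X]" "[contract G (gV G - X)]"] by auto
    have f: "final_list L1" "final_list L2" using L(1) less(4) final_append by auto
    have k1: "K4D (contract G X)"
      using less(1)[OF nt_cards(1)[OF less(2) X(1)] nt_wf_sides(1)[OF less(2) X(1)] L(2) f(1)] .
    have k2: "K4D (contract G (gV G - X))"
      using less(1)[OF nt_cards(2)[OF less(2) X(1)] nt_wf_sides(2)[OF less(2) X(1)] L(3) f(2)] .
    show ?thesis using K4D.step[OF less(2) X(1) k1 k2] .
  qed
qed

lemma K4D_iff: "wf_graph G \<Longrightarrow> has_K4_decomposition G \<longleftrightarrow> K4D G"
  using has_dec_iff K4D_imp_dec dec_imp_K4D by metis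

lemma K4D_iso: "K4D G \<Longrightarrow> wf_graph G' \<Longrightarrow> iso G' G \<Longrightarrow> K4D G'"
proof (induction arbitrary: G' rule: K4D.induct)
  case (base G)
  then show ?case using K4D.base iso_trans by blast
next
  case (step G X)
  obtain f g where im0: "isom G' G f g" using step.prems(2) iso_isom by blast
  define f' where "f' = inv_into (gV G') f"
  define g' where "g' = inv_into (gE G') g"
  have im: "isom G G' f' g'" unfolding f'_def g'_def using isom_sym[OF step.prems(1) im0] .
  have wfG: "wf_graph G" using step(1) .
  have X: "X \<subseteq> gV G" "card X \<ge> 2" "card (gV G - X) \<ge> 2" "card (cut G X) = 3"
    using step(2) unfolding nontrivial_3cut_def by auto
  have bf: "bij_betw f' (gV G) (gV G')" using im unfolding isom_def by auto
  have inj: "inj_on f' (gV G)" and fV: "f' ` gV G = gV G'" using bf by (auto simp: bij_betw_def)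
  have img: "f' ` (gV G - X) = gV G' - f' ` X" using inj_on_image_set_diff[OF inj _ X(1)] fV by simp
  have cX: "card (f' ` X) = card X" using card_image inj_on_subset[OF inj X(1)] by blast
  have cY: "card (f' ` (gV G - X)) = card (gV G - X)" using card_image inj_on_subset[OF inj, of "gV G - X"] by blast
  have sX: "f' ` X \<subseteq> gV G'" using X(1) fV by auto
  have nt': "nontrivial_3cut G' (f' ` X)"
    unfolding nontrivial_3cut_def using sX X cX cY img isom_cut(2)[OF wfG im X(1)] fV X(1) by auto
  have Xne: "X \<noteq> {}" using X(2) by (intro notI) simp
  have Yne: "gV G - X \<noteq> {}" using X(3) by (intro notI) simp
  have i1: "iso (contract G X) (contract G' (f' ` X))" using iso_contract[OF wfG im X(1) Xne] .
  have i2: "iso (contract G (gV G - X)) (contract G' (gV G' - f' ` X))"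
    using iso_contract[OF wfG im _ Yne] img by auto
  have w1: "wf_graph (contract G X)" and w2: "wf_graph (contract G (gV G - X))"
    using nt_wf_sides[OF wfG step(2)] by auto
  have w1': "wf_graph (contract G' (f' ` X))" and w2': "wf_graph (contract G' (gV G' - f' ` X))"
    using nt_wf_sides[OF step.prems(1) nt'] by auto
  have k1: "K4D (contract G' (f' ` X))" using step.IH(1)[OF w1' iso_sym[OF w1 i1]] .
  have k2: "K4D (contract G' (gV G' - f' ` X))" using step.IH(2)[OF w2' iso_sym[OF w2 i2]] .
  show ?case using K4D.step[OF step.prems(1) nt' k1 k2] .
qed


definition ec3 :: "('v, 'e) mgraph \<Rightarrow> bool" where
  "ec3 G \<longleftrightarrow> (\<forall>Y. Y \<subseteq> gV G \<longrightarrow> Y \<noteq> {} \<longrightarrow> gV G - Y \<noteq> {} \<longrightarrow> card (cut G Y) \<ge> 3)"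

definition tri :: "('v, 'e) mgraph \<Rightarrow> 'v set \<Rightarrow> bool" where
  "tri G T \<longleftrightarrow> (\<exists>a b c. T = {a, b, c} \<and> a \<noteq> b \<and> b \<noteq> c \<and> a \<noteq> c \<and>
      a \<in> gV G \<and> b \<in> gV G \<and> c \<in> gV G \<and> adj G a b \<and> adj G b c \<and> adj G a c)"

lemma adj_sym: "adj G u v \<longleftrightarrow> adj G v u"
  unfolding adj_def by (simp add: insert_commute)

lemma ec3D: "ec3 G \<Longrightarrow> Y \<subseteq> gV G \<Longrightarrow> Y \<noteq> {} \<Longrightarrow> gV G - Y \<noteq> {} \<Longrightarrow> card (cut G Y) \<ge> 3"
  unfolding ec3_def by blast

lemma card_doubleton_Int:
  assumes "x \<noteq> y"
  shows "card ({x, y} \<inter> A) = (if x \<in> A then 1 else 0) + (if y \<in> A then 1 else 0)"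
  using assms by (cases "x \<in> A"; cases "y \<in> A") (auto simp: Int_insert_left)

lemma cut_iff_2:
  assumes "x \<noteq> y"
  shows "card ({x, y} \<inter> A) = 1 \<longleftrightarrow> (x \<in> A \<longleftrightarrow> y \<notin> A)"
  using card_doubleton_Int[OF assms, of A] by auto

definition Ed :: "('v, 'e) mgraph \<Rightarrow> 'v \<Rightarrow> 'e set" where
  "Ed G v = {e \<in> gE G. v \<in> ends G e}"

lemma Ed_card: "cubic G \<Longrightarrow> v \<in> gV G \<Longrightarrow> card (Ed G v) = 3"
  unfolding cubic_def degree_def Ed_def by auto

lemma Ed_fin: assumes "wf_graph G" shows "finite (Ed G v)"
  unfolding Ed_def using wf_fin(2)[OF assms] by auto

lemma third_edge:
  assumes wf: "wf_graph G" and cub: "cubic G" and v: "v \<in> gV G"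
    and e1: "e1 \<in> Ed G v" and e2: "e2 \<in> Ed G v" and ne: "e1 \<noteq> e2"
  shows "card (Ed G v - {e1, e2}) = 1"
proof -
  have "card (Ed G v - {e1, e2}) = card (Ed G v) - card {e1, e2}"
    using card_Diff_subset[of "{e1,e2}" "Ed G v"] e1 e2 by simp
  then show ?thesis using Ed_card[OF cub v] ne by simp
qed

lemma inside_card:
  assumes "wf_graph G" "e \<in> gE G" "ends G e \<subseteq> T"
  shows "card (ends G e \<inter> T) = 2"
proof -
  have "ends G e \<inter> T = ends G e" using assms(3) by blast
  then show ?thesis using wfD(2)[OF assms(1,2)] by simp
qed

subsection \<open>Triangles and 3-cuts\<close>

lemma tri_data:
  assumes wf: "wf_graph G" and cub: "cubic G" and ec: "ec3 G"
    and V: "a \<in> gV G" "b \<in> gV G" "c \<in> gV G" and d: "a \<noteq> b" "b \<noteq> c" "a \<noteq> c"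
    and ad: "adj G a b" "adj G b c" "adj G a c" and c4: "card (gV G) \<ge> 4"
  obtains eab ebc eac ra rb rc where
    "eab \<in> gE G" "ends G eab = {a, b}" "ebc \<in> gE G" "ends G ebc = {b, c}"
    "eac \<in> gE G" "ends G eac = {a, c}"
    "cut G {a, b, c} = {ra, rb, rc}" "ra \<noteq> rb" "rb \<noteq> rc" "ra \<noteq> rc"
    "Ed G a = {eab, eac, ra}" "Ed G b = {eab, ebc, rb}" "Ed G c = {eac, ebc, rc}"
proof -
  obtain eab where eab: "eab \<in> gE G" "ends G eab = {a, b}" using ad(1) unfolding adj_def by blast
  obtain ebc where ebc: "ebc \<in> gE G" "ends G ebc = {b, c}" using ad(2) unfolding adj_def by blast
  obtain eac where eac: "eac \<in> gE G" "ends G eac = {a, c}" using ad(3) unfolding adj_def by blast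
  have n1: "eab \<noteq> eac" using eab eac d by (auto simp: doubleton_eq_iff)
  have n2: "eab \<noteq> ebc" using eab ebc d by (auto simp: doubleton_eq_iff)
  have n3: "eac \<noteq> ebc" using eac ebc d by (auto simp: doubleton_eq_iff)
  have inA: "eab \<in> Ed G a" "eac \<in> Ed G a" using eab eac unfolding Ed_def by auto
  have inB: "eab \<in> Ed G b" "ebc \<in> Ed G b" using eab ebc unfolding Ed_def by auto
  have inC: "eac \<in> Ed G c" "ebc \<in> Ed G c" using eac ebc unfolding Ed_def by auto
  obtain ra where ra: "Ed G a - {eab, eac} = {ra}"
    using third_edge[OF wf cub V(1) inA n1] by (metis card_1_singletonE)
  obtain rb where rb: "Ed G b - {eab, ebc} = {rb}"
    using third_edge[OF wf cub V(2) inB n2] by (metis card_1_singletonE)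
  obtain rc where rc: "Ed G c - {eac, ebc} = {rc}"
    using third_edge[OF wf cub V(3) inC n3] by (metis card_1_singletonE)
  let ?T = "{a, b, c}"
  have sub: "cut G ?T \<subseteq> {ra, rb, rc}"
  proof
    fix e assume e: "e \<in> cut G ?T"
    then have eE: "e \<in> gE G" and c1: "card (ends G e \<inter> ?T) = 1" unfolding cut_def by auto
    have "card (ends G eab \<inter> ?T) = 2" using inside_card[OF wf eab(1)] eab(2) by auto
    then have nab: "e \<noteq> eab" using c1 by auto
    have "card (ends G eac \<inter> ?T) = 2" using inside_card[OF wf eac(1)] eac(2) by auto
    then have nac: "e \<noteq> eac" using c1 by auto
    have "card (ends G ebc \<inter> ?T) = 2" using inside_card[OF wf ebc(1)] ebc(2) by auto
    then have nbc: "e \<noteq> ebc" using c1 by auto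
    have "ends G e \<inter> ?T \<noteq> {}" using c1 by (cases "ends G e \<inter> ?T = {}") simp_all
    then have "a \<in> ends G e \<or> b \<in> ends G e \<or> c \<in> ends G e" by auto
    then show "e \<in> {ra, rb, rc}"
    proof (elim disjE)
      assume "a \<in> ends G e"
      then have "e \<in> Ed G a - {eab, eac}" using eE nab nac unfolding Ed_def by auto
      then show ?thesis using ra by auto
    next
      assume "b \<in> ends G e"
      then have "e \<in> Ed G b - {eab, ebc}" using eE nab nbc unfolding Ed_def by auto
      then show ?thesis using rb by auto
    next
      assume "c \<in> ends G e"
      then have "e \<in> Ed G c - {eac, ebc}" using eE nac nbc unfolding Ed_def by auto
      then show ?thesis using rc by auto
    qed
  qed
  have TV: "?T \<subseteq> gV G" using V by auto
  have fin: "finite (gV G)" using wf_fin(1)[OF wf] .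
  have cT: "card ?T = 3" using d by auto
  have "card (gV G - ?T) = card (gV G) - 3" using card_Diff_subset[OF _ TV] cT by simp
  then have "gV G - ?T \<noteq> {}" using c4 fin by (intro notI) simp
  then have ge: "card (cut G ?T) \<ge> 3" using ec3D[OF ec TV] by blast
  have le: "card {ra, rb, rc} \<le> 3" by (simp add: card_insert_le_m1)
  have eq: "cut G ?T = {ra, rb, rc}" using card_seteq[OF _ sub] ge le by (meson finite.emptyI finite.insertI le_trans)
  then have c3: "card {ra, rb, rc} = 3" using ge le by simp
  have dr: "ra \<noteq> rb" "rb \<noteq> rc" "ra \<noteq> rc"
    using c3 by (auto simp: card_insert_if split: if_splits)
  have Ea: "Ed G a = {eab, eac, ra}" using ra inA by blast
  have Eb: "Ed G b = {eab, ebc, rb}" using rb inB by blast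
  have Ec: "Ed G c = {eac, ebc, rc}" using rc inC by blast
  show ?thesis using that[OF eab ebc eac eq dr Ea Eb Ec] .
qed

lemma noncross1:
  assumes wf: "wf_graph G" and cub: "cubic G" and ec: "ec3 G" and nt: "nontrivial_3cut G X"
    and a: "a \<in> X" and b: "b \<in> gV G" "b \<notin> X" and c: "c \<in> gV G" "c \<notin> X"
    and bc: "b \<noteq> c" and ad: "adj G a b" "adj G a c"
  shows False
proof -
  have X: "X \<subseteq> gV G" "card X \<ge> 2" "card (cut G X) = 3" using nt unfolding nontrivial_3cut_def by auto
  have aV: "a \<in> gV G" using a X(1) by auto
  obtain eab where eab: "eab \<in> gE G" "ends G eab = {a, b}" using ad(1) unfolding adj_def by blast
  obtain eac where eac: "eac \<in> gE G" "ends G eac = {a, c}" using ad(2) unfolding adj_def by blast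
  have ab: "a \<noteq> b" "a \<noteq> c" using a b c by auto
  have n1: "eab \<noteq> eac" using eab eac bc by (auto simp: doubleton_eq_iff)
  have inA: "eab \<in> Ed G a" "eac \<in> Ed G a" using eab eac unfolding Ed_def by auto
  have R: "card (Ed G a - {eab, eac}) = 1" using third_edge[OF wf cub aV inA n1] .
  have cutab: "eab \<in> cut G X" "eac \<in> cut G X"
    using eab eac a b c ab cut_iff_2 unfolding cut_def by auto
  have sub: "cut G (X - {a}) \<subseteq> (cut G X - {eab, eac}) \<union> (Ed G a - {eab, eac})"
  proof
    fix e assume e: "e \<in> cut G (X - {a})"
    then have eE: "e \<in> gE G" and c1: "card (ends G e \<inter> (X - {a})) = 1" unfolding cut_def by auto
    have "ends G eab \<inter> (X - {a}) = {}" using eab(2) b by auto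
    then have nab: "e \<noteq> eab" using c1 by auto
    have "ends G eac \<inter> (X - {a}) = {}" using eac(2) c by auto
    then have nac: "e \<noteq> eac" using c1 by auto
    show "e \<in> (cut G X - {eab, eac}) \<union> (Ed G a - {eab, eac})"
    proof (cases "a \<in> ends G e")
      case True then show ?thesis using eE nab nac unfolding Ed_def by auto
    next
      case False
      then have "ends G e \<inter> (X - {a}) = ends G e \<inter> X" by auto
      then show ?thesis using eE c1 nab nac unfolding cut_def by auto
    qed
  qed
  have fc: "finite (cut G X)" using wf_fin(2)[OF wf] unfolding cut_def by auto
  have c2: "card (cut G X - {eab, eac}) = 1" using card_Diff_subset[of "{eab,eac}" "cut G X"] cutab X(3) n1 fc by simp
  have fE: "finite (Ed G a)" using Ed_fin[OF wf] .
  have "card (cut G (X - {a})) \<le> card ((cut G X - {eab, eac}) \<union> (Ed G a - {eab, eac}))"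
    using card_mono[OF _ sub] fc fE by blast
  also have "\<dots> \<le> card (cut G X - {eab, eac}) + card (Ed G a - {eab, eac})" by (rule card_Un_le)
  finally have le2: "card (cut G (X - {a})) \<le> 2" using c2 R by simp
  have ne: "X - {a} \<noteq> {}"
  proof
    assume "X - {a} = {}"
    then have "X \<subseteq> {a}" by blast
    then have "card X \<le> 1" using card_mono[of "{a}" X] by simp
    then show False using X(2) by simp
  qed
  have "gV G - (X - {a}) \<noteq> {}" using b by auto
  then have "card (cut G (X - {a})) \<ge> 3" using ec3D[OF ec _ ne] X(1) by auto
  then show False using le2 by simp
qed

lemma tri_noncross:
  assumes wf: "wf_graph G" and cub: "cubic G" and ec: "ec3 G" and nt: "nontrivial_3cut G X"
    and V: "a \<in> gV G" "b \<in> gV G" "c \<in> gV G" and d: "a \<noteq> b" "b \<noteq> c" "a \<noteq> c"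
    and ad: "adj G a b" "adj G b c" "adj G a c"
  shows "{a, b, c} \<subseteq> X \<or> {a, b, c} \<inter> X = {}"
proof (rule ccontr)
  assume nc: "\<not> ({a, b, c} \<subseteq> X \<or> {a, b, c} \<inter> X = {})"
  have ntc: "nontrivial_3cut G (gV G - X)" using nt_compl[OF wf nt] .
  have ad': "adj G b a" "adj G c b" "adj G c a" using ad adj_sym by metis+
  have "False" if "x \<in> Z" "y \<in> gV G" "y \<notin> Z" "z \<in> gV G" "z \<notin> Z" "y \<noteq> z" "adj G x y" "adj G x z"
       "nontrivial_3cut G Z" for x y z Z
    using noncross1[OF wf cub ec that(9) that(1-8)] .
  note F = this
  show False
  proof (cases "a \<in> X")
    case aX: True
    show ?thesis
    proof (cases "b \<in> X")
      case bX: True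
      then have "c \<notin> X" using nc aX by auto
      then show ?thesis using F[of c "gV G - X" a b] aX bX V d ad' ntc by auto
    next
      case bX: False
      show ?thesis
      proof (cases "c \<in> X")
        case True then show ?thesis using F[of b "gV G - X" a c] aX bX V d ad' ad ntc by auto
      next
        case False then show ?thesis using F[of a X b c] aX bX V d ad nt by auto
      qed
    qed
  next
    case aX: False
    show ?thesis
    proof (cases "b \<in> X")
      case bX: True
      show ?thesis
      proof (cases "c \<in> X")
        case True then show ?thesis using F[of a "gV G - X" b c] aX bX V d ad ntc by auto
      next
        case False then show ?thesis using F[of b X a c] aX bX V d ad' ad nt by auto
      qed
    next
      case bX: False
      then have "c \<in> X" using nc aX by auto
      then show ?thesis using F[of c X a b] aX bX V d ad' nt by auto
    qed
  qed
qed


abbreviation cl :: "'v set \<Rightarrow> 'v \<Rightarrow> 'v" where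
  "cl X w \<equiv> (if w \<in> X then rep X else w)"

lemma img_cl_notin:
  assumes "X \<noteq> {}" "w \<notin> X"
  shows "w \<in> cl X ` A \<longleftrightarrow> w \<in> A"
proof -
  have r: "rep X \<in> X" using rep_in[OF assms(1)] .
  show ?thesis
  proof
    assume "w \<in> cl X ` A"
    then obtain u where u: "u \<in> A" "w = cl X u" by blast
    have "u \<notin> X" using u(2) r assms(2) by (cases "u \<in> X") auto
    then show "w \<in> A" using u by simp
  next
    assume "w \<in> A" then show "w \<in> cl X ` A" using assms(2) by (intro image_eqI[of _ _ w]) auto
  qed
qed

lemma img_cl_rep:
  assumes "X \<noteq> {}"
  shows "rep X \<in> cl X ` A \<longleftrightarrow> A \<inter> X \<noteq> {}"
proof -
  have r: "rep X \<in> X" using rep_in[OF assms(1)] .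
  show ?thesis
  proof
    assume "rep X \<in> cl X ` A"
    then obtain u where u: "u \<in> A" "rep X = cl X u" by blast
    then have "u \<in> X" using r by (cases "u \<in> X") auto
    then show "A \<inter> X \<noteq> {}" using u by blast
  next
    assume "A \<inter> X \<noteq> {}"
    then obtain u where "u \<in> A" "u \<in> X" by blast
    then show "rep X \<in> cl X ` A" by (intro image_eqI[of _ _ u]) auto
  qed
qed

lemma adj_down:
  assumes "adj G u v" "u \<notin> X" "v \<notin> X"
  shows "adj (contract G X) u v"
proof -
  obtain e where e: "e \<in> gE G" "ends G e = {u, v}" using assms(1) unfolding adj_def by blast
  have "\<not> ends G e \<subseteq> X" using e(2) assms(2) by auto
  moreover have "cl X ` ends G e = {u, v}" using e(2) assms(2,3) by simp
  ultimately show ?thesis unfolding adj_def using e(1) by auto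
qed

lemma adj_up:
  assumes "adj (contract G X) u v" "u \<notin> X" "v \<notin> X" "X \<noteq> {}"
  shows "adj G u v"
proof -
  have r: "rep X \<in> X" using rep_in[OF assms(4)] .
  obtain e where e: "e \<in> gE G" "cl X ` ends G e = {u, v}" using assms(1) unfolding adj_def by auto
  have d: "ends G e \<inter> X = {}"
  proof (rule ccontr)
    assume "ends G e \<inter> X \<noteq> {}"
    then have "rep X \<in> cl X ` ends G e" using img_cl_rep[OF assms(4)] by blast
    then show False using e(2) r assms(2,3) by auto
  qed
  have "cl X ` ends G e = id ` ends G e" using d by (intro image_cong) auto
  then have "cl X ` ends G e = ends G e" by simp
  then show ?thesis unfolding adj_def using e by auto
qed

lemma tri_up:
  assumes "tri (contract G X) T" "rep X \<notin> T" "X \<noteq> {}"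
  shows "tri G T" "T \<subseteq> gV G - X"
proof -
  obtain a b c where t: "T = {a, b, c}" "a \<noteq> b" "b \<noteq> c" "a \<noteq> c"
    "a \<in> gV (contract G X)" "b \<in> gV (contract G X)" "c \<in> gV (contract G X)"
    "adj (contract G X) a b" "adj (contract G X) b c" "adj (contract G X) a c"
    using assms(1) unfolding tri_def by blast
  have V: "a \<in> gV G - X" "b \<in> gV G - X" "c \<in> gV G - X" using t(1,5,6,7) assms(2) by auto
  show "T \<subseteq> gV G - X" using V t(1) by auto
  show "tri G T" unfolding tri_def using t V adj_up[OF _ _ _ assms(3)]
    by (intro exI[of _ a] exI[of _ b] exI[of _ c]) auto
qed

lemma tri_down:
  assumes "tri G T" "T \<inter> X = {}"
  shows "tri (contract G X) T"
proof -
  obtain a b c where t: "T = {a, b, c}" "a \<noteq> b" "b \<noteq> c" "a \<noteq> c"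
    "a \<in> gV G" "b \<in> gV G" "c \<in> gV G" "adj G a b" "adj G b c" "adj G a c"
    using assms(1) unfolding tri_def by blast
  have n: "a \<notin> X" "b \<notin> X" "c \<notin> X" using t(1) assms(2) by auto
  show ?thesis unfolding tri_def using t n adj_down
    by (intro exI[of _ a] exI[of _ b] exI[of _ c]) auto
qed

lemma cut_edge_iff:
  assumes wf: "wf_graph G" and e: "e \<in> gE G"
  shows "(\<not> ends G e \<subseteq> X \<and> ends G e \<inter> X \<noteq> {}) \<longleftrightarrow> card (ends G e \<inter> X) = 1"
proof -
  obtain p q where pq: "p \<noteq> q" "ends G e = {p, q}" using wfD(4)[OF wf e] by blast
  show ?thesis using cut_iff_2[OF pq(1), of X] pq(2) by auto
qed

lemma cubic_contract:
  assumes wf: "wf_graph G" and cub: "cubic G" and nt: "nontrivial_3cut G X"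
  shows "cubic (contract G X)"
  unfolding cubic_def
proof
  have X: "X \<subseteq> gV G" "card X \<ge> 2" "card (cut G X) = 3" using nt unfolding nontrivial_3cut_def by auto
  have Xne: "X \<noteq> {}" using X(2) by (intro notI) simp
  fix w assume w: "w \<in> gV (contract G X)"
  show "degree (contract G X) w = 3"
  proof (cases "w \<in> X")
    case True
    then have wr: "w = rep X" using w by auto
    have "{e \<in> gE (contract G X). w \<in> ends (contract G X) e} = cut G X"
    proof (intro set_eqI iffI)
      fix e assume "e \<in> {e \<in> gE (contract G X). w \<in> ends (contract G X) e}"
      then have e: "e \<in> gE G" "\<not> ends G e \<subseteq> X" "rep X \<in> cl X ` ends G e" using wr by auto
      then have "ends G e \<inter> X \<noteq> {}" using img_cl_rep[OF Xne] by blast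
      then show "e \<in> cut G X" unfolding cut_def using cut_edge_iff[OF wf e(1)] e by blast
    next
      fix e assume "e \<in> cut G X"
      then have e: "e \<in> gE G" "card (ends G e \<inter> X) = 1" unfolding cut_def by auto
      then have "\<not> ends G e \<subseteq> X" "ends G e \<inter> X \<noteq> {}" using cut_edge_iff[OF wf e(1)] by blast+
      then show "e \<in> {e \<in> gE (contract G X). w \<in> ends (contract G X) e}"
        using e img_cl_rep[OF Xne] wr by auto
    qed
    then show ?thesis unfolding degree_def using X(3) by simp
  next
    case False
    then have wV: "w \<in> gV G" using w rep_in[OF Xne] by auto
    have "{e \<in> gE (contract G X). w \<in> ends (contract G X) e} = {e \<in> gE G. w \<in> ends G e}"
    proof (intro set_eqI iffI)
      fix e assume "e \<in> {e \<in> gE (contract G X). w \<in> ends (contract G X) e}"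
      then show "e \<in> {e \<in> gE G. w \<in> ends G e}" using img_cl_notin[OF Xne False] by auto
    next
      fix e assume e: "e \<in> {e \<in> gE G. w \<in> ends G e}"
      then have "\<not> ends G e \<subseteq> X" using False by auto
      then show "e \<in> {e \<in> gE (contract G X). w \<in> ends (contract G X) e}"
        using e img_cl_notin[OF Xne False] by auto
    qed
    then show ?thesis unfolding degree_def using cub wV unfolding cubic_def degree_def by simp
  qed
qed

lemma ec3_contract:
  assumes wf: "wf_graph G" and ec: "ec3 G" and X: "X \<subseteq> gV G" "X \<noteq> {}"
  shows "ec3 (contract G X)"
  unfolding ec3_def
proof (intro allI impI)
  have r: "rep X \<in> X" using rep_in[OF X(2)] .
  fix Y assume Y: "Y \<subseteq> gV (contract G X)" "Y \<noteq> {}" "gV (contract G X) - Y \<noteq> {}"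
  define Y' where "Y' = (Y - {rep X}) \<union> (if rep X \<in> Y then X else {})"
  have mem: "cl X w \<in> Y \<longleftrightarrow> w \<in> Y'" if "w \<in> gV G" for w
  proof (cases "w \<in> X")
    case True
    have "w \<in> Y \<Longrightarrow> w = rep X" using Y(1) True by auto
    then show ?thesis unfolding Y'_def using r True by auto
  next
    case False then show ?thesis unfolding Y'_def using r Y(1) that by auto
  qed
  have cuteq: "cut (contract G X) Y = cut G Y'"
  proof (intro set_eqI)
    fix e
    show "e \<in> cut (contract G X) Y \<longleftrightarrow> e \<in> cut G Y'"
    proof (cases "e \<in> gE G")
      case False then show ?thesis unfolding cut_def by auto
    next
      case eE: True
      obtain p q where pq: "p \<noteq> q" "ends G e = {p, q}" using wfD(4)[OF wf eE] by blast
      have pqV: "p \<in> gV G" "q \<in> gV G" using wfD(1)[OF wf eE] pq(2) by auto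
      have cG: "card (ends G e \<inter> Y') = 1 \<longleftrightarrow> (p \<in> Y' \<longleftrightarrow> q \<notin> Y')" using cut_iff_2[OF pq(1)] pq(2) by simp
      show ?thesis
      proof (cases "ends G e \<subseteq> X")
        case True
        then have "p \<in> X" "q \<in> X" using pq by auto
        then have "(p \<in> Y' \<longleftrightarrow> q \<in> Y')" using mem[OF pqV(1)] mem[OF pqV(2)] by auto
        then show ?thesis unfolding cut_def using True cG by auto
      next
        case False
        have img: "ends (contract G X) e = {cl X p, cl X q}" using pq(2) by simp
        have ne: "cl X p \<noteq> cl X q" using False pq r by (auto split: if_splits)
        have "card (ends (contract G X) e \<inter> Y) = 1 \<longleftrightarrow> (cl X p \<in> Y \<longleftrightarrow> cl X q \<notin> Y)"
          using cut_iff_2[OF ne] img by simp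
        then show ?thesis unfolding cut_def using False eE cG mem[OF pqV(1)] mem[OF pqV(2)] by auto
      qed
    qed
  qed
  have Y'V: "Y' \<subseteq> gV G" unfolding Y'_def using Y(1) X(1) by auto
  have Y'ne: "Y' \<noteq> {}"
  proof -
    obtain y where y: "y \<in> Y" using Y(2) by blast
    show ?thesis
    proof (cases "y = rep X")
      case True then show ?thesis unfolding Y'_def using y X(2) by auto
    next
      case False then show ?thesis unfolding Y'_def using y by auto
    qed
  qed
  have Y'c: "gV G - Y' \<noteq> {}"
  proof -
    obtain z where z: "z \<in> gV (contract G X)" "z \<notin> Y" using Y(3) by blast
    show ?thesis
    proof (cases "z = rep X")
      case True
      then have "rep X \<notin> Y'" unfolding Y'_def using z(2) r by auto
      then show ?thesis using r X(1) by auto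
    next
      case False
      then have "z \<in> gV G" "z \<notin> Y'" unfolding Y'_def using z by auto
      then show ?thesis by auto
    qed
  qed
  show "card (cut (contract G X) Y) \<ge> 3" using ec3D[OF ec Y'V Y'ne Y'c] cuteq by simp
qed

lemma contract_comm:
  assumes "X \<inter> T = {}" "X \<noteq> {}" "T \<noteq> {}"
  shows "contract (contract G X) T = contract (contract G T) X"
proof -
  have rX: "rep X \<in> X" using rep_in[OF assms(2)] .
  have rT: "rep T \<in> T" using rep_in[OF assms(3)] .
  have rXT: "rep X \<notin> T" "rep T \<notin> X" using rX rT assms(1) by auto
  have V: "gV (contract (contract G X) T) = gV (contract (contract G T) X)"
    using rXT rX rT assms(1) by auto
  have sub1: "cl X ` A \<subseteq> T \<longleftrightarrow> A \<subseteq> T" for A using rXT assms(1) by auto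
  have sub2: "cl T ` A \<subseteq> X \<longleftrightarrow> A \<subseteq> X" for A using rXT assms(1) by auto
  have E: "gE (contract (contract G X) T) = gE (contract (contract G T) X)"
    using sub1 sub2 by auto
  have cc: "cl T (cl X w) = cl X (cl T w)" for w using rXT assms(1) by auto
  have en: "ends (contract (contract G X) T) = ends (contract (contract G T) X)"
  proof
    fix e
    have "ends (contract (contract G X) T) e = (\<lambda>w. cl T (cl X w)) ` ends G e"
      by (simp only: contract_simps image_image)
    also have "\<dots> = (\<lambda>w. cl X (cl T w)) ` ends G e" using cc by simp
    also have "\<dots> = ends (contract (contract G T) X) e" by (simp only: contract_simps image_image)
    finally show "ends (contract (contract G X) T) e = ends (contract (contract G T) X) e" .
  qed
  show ?thesis using V E en by (simp add: mgraph.equality)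
qed

lemma cut_contract_disj:
  assumes "T \<inter> Z = {}" "T \<noteq> {}"
  shows "cut (contract G T) Z = cut G Z"
proof -
  have rT: "rep T \<in> T" using rep_in[OF assms(2)] .
  have ii: "cl T ` A \<inter> Z = A \<inter> Z" for A
  proof
    show "cl T ` A \<inter> Z \<subseteq> A \<inter> Z"
    proof
      fix x assume "x \<in> cl T ` A \<inter> Z"
      then obtain u where u: "u \<in> A" "x = cl T u" "x \<in> Z" by blast
      then have "u \<notin> T" using rT assms(1) by (cases "u \<in> T") auto
      then show "x \<in> A \<inter> Z" using u by simp
    qed
    show "A \<inter> Z \<subseteq> cl T ` A \<inter> Z"
    proof
      fix x assume x: "x \<in> A \<inter> Z"
      then have "x \<notin> T" using assms(1) by auto
      then show "x \<in> cl T ` A \<inter> Z" using x by (intro IntI image_eqI[of _ _ x]) auto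
    qed
  qed
  show ?thesis
  proof (intro set_eqI iffI)
    fix e assume "e \<in> cut (contract G T) Z"
    then show "e \<in> cut G Z" unfolding cut_def using ii by auto
  next
    fix e assume e: "e \<in> cut G Z"
    then have c: "card (ends G e \<inter> Z) = 1" unfolding cut_def by auto
    have "\<not> ends G e \<subseteq> T"
    proof
      assume "ends G e \<subseteq> T"
      then have "ends G e \<inter> Z = {}" using assms(1) by auto
      then show False using c by simp
    qed
    then show "e \<in> cut (contract G T) Z" using e ii unfolding cut_def by auto
  qed
qed


lemma nt_ne:
  assumes "nontrivial_3cut G X"
  shows "X \<subseteq> gV G" "X \<noteq> {}" "gV G - X \<noteq> {}" "card X \<ge> 2" "card (gV G - X) \<ge> 2" "card (cut G X) = 3"
  using assms unfolding nontrivial_3cut_def by (auto intro!: notI)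

lemma Lstep:
  assumes wf: "wf_graph G" and nt: "nontrivial_3cut G Z"
    and T: "T = {a, b, c}" "a \<noteq> b" "b \<noteq> c" "a \<noteq> c" "T \<subseteq> gV G" "T \<inter> Z = {}"
    and kZ: "K4D (contract G Z)" and kY: "K4D (contract G (gV G - Z))"
    and IH: "card (gV (contract G Z)) \<ge> 5 \<Longrightarrow> K4D (contract (contract G Z) T)"
  shows "K4D (contract G T)"
proof -
  note Z = nt_ne[OF nt]
  define Y where "Y = gV G - Z"
  have fin: "finite (gV G)" using wf_fin(1)[OF wf] .
  have TY: "T \<subseteq> Y" unfolding Y_def using T(5,6) by auto
  have cT: "card T = 3" using T(1-4) by simp
  have finY: "finite Y" unfolding Y_def using fin by simp
  have cY3: "card Y \<ge> 3" using card_mono[OF finY TY] cT by simp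
  have Tne: "T \<noteq> {}" using T(1) by simp
  show ?thesis
  proof (cases "card Y = 3")
    case True
    then have "T = Y" using card_subset_eq[OF finY TY] cT by simp
    then show ?thesis using kY unfolding Y_def by simp
  next
    case False
    then have cY4: "card Y \<ge> 4" using cY3 by simp
    have c5: "card (gV (contract G Z)) \<ge> 5" using card_contract[OF fin Z(1) Z(2)] cY4 unfolding Y_def by simp
    have comm: "contract (contract G Z) T = contract (contract G T) Z"
      using contract_comm[OF _ Z(2) Tne] T(6) by blast
    define G' where "G' = contract G T"
    have k1: "K4D (contract G' Z)" using IH[OF c5] comm unfolding G'_def by simp
    have wf': "wf_graph G'" unfolding G'_def using wf_contract[OF wf T(5) Tne] .
    have rT: "rep T \<in> T" using rep_in[OF Tne] .
    have V': "gV G' = (gV G - T) \<union> {rep T}" unfolding G'_def by simp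
    have ZV': "Z \<subseteq> gV G'" using V' Z(1) T(6) by auto
    obtain y where y: "y \<in> Y - T"
    proof -
      have "card (Y - T) = card Y - 3" using card_Diff_subset[OF finite_subset[OF TY finY] TY] cT by simp
      then have "Y - T \<noteq> {}" using cY4 by (intro notI) simp
      then show ?thesis using that by blast
    qed
    have y2: "y \<in> gV G' - Z" "rep T \<in> gV G' - Z" "y \<noteq> rep T"
      using y rT V' T(6) unfolding Y_def by auto
    have finV': "finite (gV G')" using wf_fin(1)[OF wf'] .
    have cY': "card (gV G' - Z) \<ge> 2"
    proof -
      have "{y, rep T} \<subseteq> gV G' - Z" using y2 by auto
      then have "card {y, rep T} \<le> card (gV G' - Z)" using finV' by (intro card_mono) auto
      then show ?thesis using y2(3) by simp
    qed
    have cc: "cut G' Z = cut G Z" unfolding G'_def using cut_contract_disj[OF T(6) Tne] .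
    have nt': "nontrivial_3cut G' Z" unfolding nontrivial_3cut_def using ZV' Z cY' cc by simp
    define Y' where "Y' = gV G' - Z"
    have Y'ne: "Y' \<noteq> {}" unfolding Y'_def using y2 by auto
    have Yne: "Y \<noteq> {}" using y by auto
    have rY': "rep Y' \<in> Y'" using rep_in[OF Y'ne] .
    have rY: "rep Y \<in> Y" using rep_in[OF Yne] .
    have rYZ: "rep Y' \<notin> Z" "rep Y \<notin> Z" using rY' rY unfolding Y'_def Y_def by auto
    define f where "f = (\<lambda>v. if v \<in> Z then v else rep Y)"
    have VA: "gV (contract G' Y') = Z \<union> {rep Y'}" unfolding Y'_def using ZV' by auto
    have VB: "gV (contract G Y) = Z \<union> {rep Y}" unfolding Y_def using Z(1) by auto
    have bf: "bij_betw f (gV (contract G' Y')) (gV (contract G Y))"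
      unfolding bij_betw_def VA VB
    proof
      show "inj_on f (Z \<union> {rep Y'})" unfolding f_def using rYZ by (auto intro!: inj_onI split: if_splits)
      show "f ` (Z \<union> {rep Y'}) = Z \<union> {rep Y}" unfolding f_def using rYZ by auto
    qed
    have memY: "cl T w \<in> Y' \<longleftrightarrow> w \<in> Y" if "w \<in> gV G" for w
    proof (cases "w \<in> T")
      case True then show ?thesis using TY y2(2) unfolding Y'_def by auto
    next
      case False then show ?thesis using that V' unfolding Y'_def Y_def by auto
    qed
    have imgsub: "cl T ` A \<subseteq> Y' \<longleftrightarrow> A \<subseteq> Y" if "A \<subseteq> gV G" for A
    proof -
      have "cl T ` A \<subseteq> Y' \<longleftrightarrow> (\<forall>x\<in>A. cl T x \<in> Y')" by (rule image_subset_iff)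
      also have "\<dots> \<longleftrightarrow> (\<forall>x\<in>A. x \<in> Y)" using memY that by blast
      finally show ?thesis by blast
    qed
    have EE: "gE (contract G' Y') = gE (contract G Y)"
    proof (intro set_eqI iffI)
      fix e assume "e \<in> gE (contract G' Y')"
      then have e: "e \<in> gE G" "\<not> cl T ` ends G e \<subseteq> Y'" unfolding G'_def by auto
      have "ends G e \<subseteq> gV G" using wfD(1)[OF wf e(1)] .
      then have "\<not> ends G e \<subseteq> Y" using e(2) imgsub by blast
      then show "e \<in> gE (contract G Y)" using e(1) by simp
    next
      fix e assume "e \<in> gE (contract G Y)"
      then have e: "e \<in> gE G" "\<not> ends G e \<subseteq> Y" by auto
      have s: "ends G e \<subseteq> gV G" using wfD(1)[OF wf e(1)] .
      then have "\<not> cl T ` ends G e \<subseteq> Y'" using e(2) imgsub by blast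
      moreover have "\<not> ends G e \<subseteq> T" using e(2) TY by auto
      ultimately show "e \<in> gE (contract G' Y')" using e(1) unfolding G'_def by simp
    qed
    have EN: "ends (contract G Y) e = f ` ends (contract G' Y') e" if "e \<in> gE (contract G' Y')" for e
    proof -
      have eE: "e \<in> gE G" using that unfolding G'_def by auto
      have s: "ends G e \<subseteq> gV G" using wfD(1)[OF wf eE] .
      have "f ` ends (contract G' Y') e = (\<lambda>w. f (cl Y' (cl T w))) ` ends G e"
        unfolding G'_def by (simp only: contract_simps image_image)
      also have "\<dots> = cl Y ` ends G e"
      proof (rule image_cong[OF refl])
        fix w assume "w \<in> ends G e"
        then have wV: "w \<in> gV G" using s by auto
        show "f (cl Y' (cl T w)) = cl Y w"
        proof (cases "w \<in> Y")
          case True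
          then have "cl T w \<in> Y'" using memY[OF wV] by simp
          then show ?thesis using True rYZ unfolding f_def by simp
        next
          case False
          then have "w \<in> Z" "w \<notin> T" using wV TY unfolding Y_def by auto
          moreover have "w \<notin> Y'" using \<open>w \<in> Z\<close> unfolding Y'_def by auto
          ultimately show ?thesis using False unfolding f_def by simp
        qed
      qed
      finally show ?thesis by simp
    qed
    have im: "isom (contract G' Y') (contract G Y) f id"
      unfolding isom_def using bf EE EN by simp
    have wfA: "wf_graph (contract G' Y')" using wf_contract[OF wf' _ Y'ne] unfolding Y'_def by auto
    have k2: "K4D (contract G' (gV G' - Z))"
      using K4D_iso[OF kY wfA] im iso_isom unfolding Y'_def Y_def by blast
    show ?thesis using K4D.step[OF wf' nt' k1 k2] unfolding G'_def .
  qed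
qed

lemma L_contract_tri:
  "K4D G \<Longrightarrow> cubic G \<Longrightarrow> ec3 G \<Longrightarrow> card (gV G) \<ge> 5 \<Longrightarrow>
   a \<in> gV G \<Longrightarrow> b \<in> gV G \<Longrightarrow> c \<in> gV G \<Longrightarrow> a \<noteq> b \<Longrightarrow> b \<noteq> c \<Longrightarrow> a \<noteq> c \<Longrightarrow>
   adj G a b \<Longrightarrow> adj G b c \<Longrightarrow> adj G a c \<Longrightarrow> K4D (contract G {a, b, c})"
proof (induction arbitrary: a b c rule: K4D.induct)
  case (base G)
  then show ?case using iso_K4_complete(1) by fastforce
next
  case (step G X)
  note wf = step(1) and nt = step(2)
  note X = nt_ne[OF nt]
  have ntc: "nontrivial_3cut G (gV G - X)" using nt_compl[OF wf nt] .
  have TV: "{a, b, c} \<subseteq> gV G" using step.prems by auto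
  have gen: "K4D (contract G {a, b, c})"
    if ntZ: "nontrivial_3cut G Z" and dj: "{a, b, c} \<inter> Z = {}" and kZ: "K4D (contract G Z)"
      and kY: "K4D (contract G (gV G - Z))"
      and IHZ: "\<And>a b c. cubic (contract G Z) \<Longrightarrow> ec3 (contract G Z) \<Longrightarrow> 5 \<le> card (gV (contract G Z)) \<Longrightarrow>
         a \<in> gV (contract G Z) \<Longrightarrow> b \<in> gV (contract G Z) \<Longrightarrow> c \<in> gV (contract G Z) \<Longrightarrow>
         a \<noteq> b \<Longrightarrow> b \<noteq> c \<Longrightarrow> a \<noteq> c \<Longrightarrow> adj (contract G Z) a b \<Longrightarrow> adj (contract G Z) b c \<Longrightarrow>
         adj (contract G Z) a c \<Longrightarrow> K4D (contract (contract G Z) {a, b, c})" for Z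
  proof -
    note ZZ = nt_ne[OF ntZ]
    have cubZ: "cubic (contract G Z)" using cubic_contract[OF wf step.prems(1) ntZ] .
    have ecZ: "ec3 (contract G Z)" using ec3_contract[OF wf step.prems(2) ZZ(1) ZZ(2)] .
    have nin: "a \<notin> Z" "b \<notin> Z" "c \<notin> Z" using dj by auto
    have inV: "a \<in> gV (contract G Z)" "b \<in> gV (contract G Z)" "c \<in> gV (contract G Z)"
      using nin step.prems(4-6) by auto
    have adjs: "adj (contract G Z) a b" "adj (contract G Z) b c" "adj (contract G Z) a c"
      using adj_down nin step.prems(10-12) by metis+
    show ?thesis
      using Lstep[OF wf ntZ refl step.prems(7-9) TV dj kZ kY]
        IHZ[OF cubZ ecZ _ inV step.prems(7-9) adjs] by blast
  qed
  from tri_noncross[OF wf step.prems(1,2) nt step.prems(4-12)]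
  show ?case
  proof
    assume sub: "{a, b, c} \<subseteq> X"
    have dj: "{a, b, c} \<inter> (gV G - X) = {}" using sub by auto
    have k: "K4D (contract G (gV G - (gV G - X)))" using step.hyps(3) contract_compl_compl[OF X(1)] by simp
    show ?thesis using gen[OF ntc dj step.hyps(4) k step.IH(2)] .
  next
    assume dj: "{a, b, c} \<inter> X = {}"
    show ?thesis using gen[OF nt dj step.hyps(3) step.hyps(4) step.IH(1)] .
  qed
qed

lemma Qside:
  assumes wf: "wf_graph G" and Z: "Z \<subseteq> gV G" "Z \<noteq> {}" and k: "K4D (contract G Z)"
    and IH: "card (gV (contract G Z)) \<ge> 5 \<Longrightarrow>
      \<exists>T1 T2. tri (contract G Z) T1 \<and> tri (contract G Z) T2 \<and> T1 \<inter> T2 = {}"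
  shows "\<exists>T. tri G T \<and> T \<subseteq> gV G - Z"
proof -
  have fin: "finite (gV G)" using wf_fin(1)[OF wf] .
  have cc: "card (gV (contract G Z)) = card (gV G - Z) + 1" using card_contract[OF fin Z] .
  have c4: "card (gV (contract G Z)) \<ge> 4" using K4D_card[OF k] .
  have wfc: "wf_graph (contract G Z)" using wf_contract[OF wf Z] .
  show ?thesis
  proof (cases "card (gV (contract G Z)) = 4")
    case True
    have i: "iso (contract G Z) K4" using K4D_card4[OF k True] .
    have cpl: "\<forall>u\<in>gV (contract G Z). \<forall>v\<in>gV (contract G Z). u \<noteq> v \<longrightarrow> adj (contract G Z) u v"
      using iso_K4_complete(2)[OF wfc i] .
    have "card (gV G - Z) = 3" using cc True by simp
    then obtain x y z where xyz: "gV G - Z = {x, y, z}" "x \<noteq> y" "y \<noteq> z" "x \<noteq> z"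
      unfolding card_3_iff by blast
    have inV: "x \<in> gV (contract G Z)" "y \<in> gV (contract G Z)" "z \<in> gV (contract G Z)" using xyz(1)
      by (auto simp del: contract_simps simp: contract_simps(1))
    have nz: "x \<notin> Z" "y \<notin> Z" "z \<notin> Z" using xyz(1) by auto
    have a1: "adj G x y" using adj_up[OF _ nz(1,2) Z(2)] cpl inV xyz by blast
    have a2: "adj G y z" using adj_up[OF _ nz(2,3) Z(2)] cpl inV xyz by blast
    have a3: "adj G x z" using adj_up[OF _ nz(1,3) Z(2)] cpl inV xyz by blast
    have "tri G {x, y, z}" unfolding tri_def using xyz a1 a2 a3 by blast
    then show ?thesis using xyz(1) by auto
  next
    case False
    then have "card (gV (contract G Z)) \<ge> 5" using c4 by simp
    then obtain T1 T2 where t: "tri (contract G Z) T1" "tri (contract G Z) T2" "T1 \<inter> T2 = {}"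
      using IH by blast
    have "rep Z \<notin> T1 \<or> rep Z \<notin> T2" using t(3) by auto
    then show ?thesis
    proof
      assume "rep Z \<notin> T1" then show ?thesis using tri_up[OF t(1) _ Z(2)] by blast
    next
      assume "rep Z \<notin> T2" then show ?thesis using tri_up[OF t(2) _ Z(2)] by blast
    qed
  qed
qed

lemma Q_two_tri:
  "K4D G \<Longrightarrow> card (gV G) \<ge> 5 \<Longrightarrow> \<exists>T1 T2. tri G T1 \<and> tri G T2 \<and> T1 \<inter> T2 = {}"
proof (induction rule: K4D.induct)
  case (base G)
  then show ?case using iso_K4_complete(1) by fastforce
next
  case (step G X)
  note X = nt_ne[OF step(2)]
  obtain T1 where T1: "tri G T1" "T1 \<subseteq> gV G - X" using Qside[OF step(1) X(1) X(2) step.hyps(3) step.IH(1)] by blast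
  obtain T2 where T2: "tri G T2" "T2 \<subseteq> gV G - (gV G - X)"
    using Qside[OF step(1) _ X(3) step.hyps(4) step.IH(2)] by blast
  have "T1 \<inter> T2 = {}" using T1(2) T2(2) by auto
  then show ?case using T1(1) T2(1) by blast
qed


definition simple :: "('v, 'e) mgraph \<Rightarrow> bool" where
  "simple H \<longleftrightarrow> (\<forall>e1\<in>gE H. \<forall>e2\<in>gE H. ends H e1 = ends H e2 \<longrightarrow> e1 = e2)"

lemma iso_crit:
  assumes wfG: "wf_graph G" and wfH: "wf_graph H" and bf: "bij_betw f (gV G) (gV H)"
    and ad: "\<forall>u\<in>gV G. \<forall>v\<in>gV G. adj H (f u) (f v) \<longleftrightarrow> adj G u v"
    and sH: "simple H" and cE: "card (gE G) = card (gE H)"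
  shows "\<exists>g. isom G H f g"
proof -
  define g where "g = (\<lambda>e. THE e'. e' \<in> gE H \<and> ends H e' = f ` ends G e)"
  have gp: "g e \<in> gE H \<and> ends H (g e) = f ` ends G e" if e: "e \<in> gE G" for e
  proof -
    obtain u v where uv: "u \<noteq> v" "ends G e = {u, v}" using wfD(4)[OF wfG e] by blast
    have uvV: "u \<in> gV G" "v \<in> gV G" using wfD(1)[OF wfG e] uv(2) by auto
    have "adj G u v" unfolding adj_def using e uv(2) by blast
    then have "adj H (f u) (f v)" using ad uvV by blast
    then obtain e' where e': "e' \<in> gE H" "ends H e' = {f u, f v}" unfolding adj_def by blast
    have ex: "\<exists>!e'. e' \<in> gE H \<and> ends H e' = f ` ends G e"
    proof
      show "e' \<in> gE H \<and> ends H e' = f ` ends G e" using e' uv(2) by simp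
      fix e2 assume "e2 \<in> gE H \<and> ends H e2 = f ` ends G e"
      then show "e2 = e'" using sH e' uv(2) unfolding simple_def by auto
    qed
    show ?thesis unfolding g_def using theI'[OF ex] .
  qed
  have inj: "inj_on f (gV G)" and fV: "f ` gV G = gV H" using bf by (auto simp: bij_betw_def)
  have surj: "g ` gE G = gE H"
  proof (intro equalityI subsetI)
    fix x assume "x \<in> g ` gE G" then show "x \<in> gE H" using gp by auto
  next
    fix e' assume e': "e' \<in> gE H"
    obtain p q where pq: "p \<noteq> q" "ends H e' = {p, q}" using wfD(4)[OF wfH e'] by blast
    have pqV: "p \<in> gV H" "q \<in> gV H" using wfD(1)[OF wfH e'] pq(2) by auto
    obtain u where u: "u \<in> gV G" "p = f u" using pqV(1) fV by auto
    obtain v where v: "v \<in> gV G" "q = f v" using pqV(2) fV by auto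
    have "adj H (f u) (f v)" unfolding adj_def using e' pq u v by blast
    then have "adj G u v" using ad u v by blast
    then obtain e where e: "e \<in> gE G" "ends G e = {u, v}" unfolding adj_def by blast
    have "g e = e'" using gp[OF e(1)] e(2) e' pq u v sH unfolding simple_def by auto
    then show "e' \<in> g ` gE G" using e(1) by blast
  qed
  have "inj_on g (gE G)"
    using eq_card_imp_inj_on[OF wf_fin(2)[OF wfG], of g] surj cE by simp
  then have "bij_betw g (gE G) (gE H)" using surj by (simp add: bij_betw_def)
  then have "isom G H f g" unfolding isom_def using bf gp by blast
  then show ?thesis by blast
qed

lemma simple_K4: "simple K4"
  unfolding simple_def
proof (intro ballI impI)
  fix e1 e2 assume e: "e1 \<in> gE K4" "e2 \<in> gE K4" "ends K4 e1 = ends K4 e2"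
  obtain i j where ij: "e1 = (i, j)" "i < j" using e(1) unfolding K4_def by auto
  obtain k l where kl: "e2 = (k, l)" "k < l" using e(2) unfolding K4_def by auto
  have "{i, j} = {k, l}" using e(3) ij kl by (simp add: K4_ends)
  then have "(i = k \<and> j = l) \<or> (i = l \<and> j = k)" by (simp add: doubleton_eq_iff)
  then show "e1 = e2" using ij kl by auto
qed

lemma card_K4_E: "card (gE K4) = 6" by (simp add: K4_E)

lemma cut_not_inside:
  assumes "wf_graph G" "e \<in> cut G T" shows "\<not> ends G e \<subseteq> T"
proof
  assume s: "ends G e \<subseteq> T"
  have "e \<in> gE G" "card (ends G e \<inter> T) = 1" using assms(2) unfolding cut_def by auto
  then show False using inside_card[OF assms(1) _ s] by simp
qed

lemma K4_side:
  assumes wf: "wf_graph G" and cub: "cubic G" and ec: "ec3 G"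
    and V: "a \<in> gV G" "b \<in> gV G" "c \<in> gV G" and d: "a \<noteq> b" "b \<noteq> c" "a \<noteq> c"
    and ad: "adj G a b" "adj G b c" "adj G a c" and c4: "card (gV G) \<ge> 5"
  shows "\<exists>v. iso_at (contract G (gV G - {a, b, c})) (rep (gV G - {a, b, c})) K4 v \<and> v \<in> gV K4"
proof -
  let ?T = "{a, b, c}"
  define Y where "Y = gV G - ?T"
  have c4': "card (gV G) \<ge> 4" using c4 by simp
  obtain eab ebc eac ra rb rc where D:
    "eab \<in> gE G" "ends G eab = {a, b}" "ebc \<in> gE G" "ends G ebc = {b, c}"
    "eac \<in> gE G" "ends G eac = {a, c}"
    "cut G ?T = {ra, rb, rc}" "ra \<noteq> rb" "rb \<noteq> rc" "ra \<noteq> rc"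
    "Ed G a = {eab, eac, ra}" "Ed G b = {eab, ebc, rb}" "Ed G c = {eac, ebc, rc}"
    using tri_data[OF wf cub ec V d ad c4'] by blast
  have fin: "finite (gV G)" using wf_fin(1)[OF wf] .
  have TV: "?T \<subseteq> gV G" using V by auto
  have cT: "card ?T = 3" using d by simp
  have "card Y = card (gV G) - 3" unfolding Y_def using card_Diff_subset[OF _ TV] cT by simp
  then have Yne: "Y \<noteq> {}" using c4 fin by (intro notI) simp
  have rY: "rep Y \<in> Y" using rep_in[OF Yne] .
  have rYT: "rep Y \<notin> ?T" using rY unfolding Y_def by auto
  define H where "H = contract G Y"
  have wfH: "wf_graph H" unfolding H_def using wf_contract[OF wf _ Yne] unfolding Y_def by auto
  have VH: "gV H = {a, b, c, rep Y}" unfolding H_def Y_def using TV by auto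
  have nY: "a \<notin> Y" "b \<notin> Y" "c \<notin> Y" unfolding Y_def by auto
  have ra_c: "ra \<in> cut G ?T" "rb \<in> cut G ?T" "rc \<in> cut G ?T" using D(7) by auto
  have ra_in: "ra \<in> Ed G a" "rb \<in> Ed G b" "rc \<in> Ed G c" using D(11-13) by auto
  have radj: "adj H x (rep Y)" if x: "x \<in> ?T" "r \<in> cut G ?T" "r \<in> Ed G x" for x r
  proof -
    have rE: "r \<in> gE G" "x \<in> ends G r" using x(3) unfolding Ed_def by auto
    obtain p q where pq: "p \<noteq> q" "ends G r = {p, q}" using wfD(4)[OF wf rE(1)] by blast
    have "card (ends G r \<inter> ?T) = 1" using x(2) unfolding cut_def by auto
    then have pqT: "(p \<in> ?T \<longleftrightarrow> q \<notin> ?T)" using cut_iff_2[OF pq(1)] pq(2) by simp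
    obtain w where w: "ends G r = {x, w}" "w \<notin> ?T"
    proof (cases "x = p")
      case True then show ?thesis using that pq pqT x(1) by auto
    next
      case False then have "x = q" using rE(2) pq(2) by auto
      then show ?thesis using that pq pqT x(1) by (auto simp: insert_commute)
    qed
    have wV: "w \<in> gV G" using wfD(1)[OF wf rE(1)] w(1) by auto
    then have wY: "w \<in> Y" unfolding Y_def using w(2) by auto
    have xY: "x \<notin> Y" using x(1) unfolding Y_def by auto
    have "ends H r = {x, rep Y}" unfolding H_def using w(1) wY xY by auto
    moreover have "r \<in> gE H" unfolding H_def using rE(1) w(1) xY by auto
    ultimately show ?thesis unfolding adj_def by blast
  qed
  have adjH: "adj H u v \<longleftrightarrow> u \<noteq> v" if "u \<in> gV H" "v \<in> gV H" for u v
  proof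
    assume "adj H u v"
    then obtain e where "e \<in> gE H" "ends H e = {u, v}" unfolding adj_def by blast
    then show "u \<noteq> v" using wfD(2)[OF wfH] by fastforce
  next
    assume ne: "u \<noteq> v"
    have ab: "adj H a b" "adj H b c" "adj H a c" unfolding H_def using adj_down nY ad by metis+
    have r: "adj H a (rep Y)" "adj H b (rep Y)" "adj H c (rep Y)"
      using radj ra_c ra_in by auto
    have all: "adj H x y" if "x \<in> gV H" "y \<in> gV H" "x \<noteq> y" "\<And>x y. adj H x y \<Longrightarrow> adj H y x" for x y
      using that ab r VH by auto
    show "adj H u v" using all[OF that ne] adj_sym by metis
  qed
  define f where "f = (\<lambda>x. if x = a then 0 else if x = b then 1 else if x = c then 2 else (3::nat))"
  have bf: "bij_betw f (gV H) (gV K4)"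
    unfolding bij_betw_def VH K4_V
  proof
    show "inj_on f {a, b, c, rep Y}" unfolding f_def using d rYT by (auto simp: inj_on_def)
    show "f ` {a, b, c, rep Y} = {0..<4}" unfolding f_def using d rYT by (auto simp: less4)
  qed
  have injf: "inj_on f (gV H)" using bf by (simp add: bij_betw_def)
  have fr: "f u \<in> gV K4" if "u \<in> gV H" for u using bf that by (auto simp: bij_betw_def)
  have ad2: "\<forall>u\<in>gV H. \<forall>v\<in>gV H. adj K4 (f u) (f v) \<longleftrightarrow> adj H u v"
  proof (intro ballI)
    fix u v assume uv: "u \<in> gV H" "v \<in> gV H"
    have "adj K4 (f u) (f v) \<longleftrightarrow> f u \<noteq> f v" using fr[OF uv(1)] fr[OF uv(2)] by (auto simp: K4_adj K4_V)
    also have "\<dots> \<longleftrightarrow> u \<noteq> v" using injf uv by (auto dest: inj_onD)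
    finally show "adj K4 (f u) (f v) \<longleftrightarrow> adj H u v" using adjH[OF uv] by simp
  qed
  have EH: "gE H = {eab, ebc, eac, ra, rb, rc}"
  proof (intro equalityI subsetI)
    fix e assume "e \<in> gE H"
    then have e: "e \<in> gE G" "\<not> ends G e \<subseteq> Y" unfolding H_def by auto
    then obtain x where x: "x \<in> ends G e" "x \<notin> Y" by blast
    have "x \<in> gV G" using wfD(1)[OF wf e(1)] x(1) by auto
    then have "x \<in> ?T" using x(2) unfolding Y_def by auto
    then have "e \<in> Ed G a \<or> e \<in> Ed G b \<or> e \<in> Ed G c" using x e(1) unfolding Ed_def by auto
    then show "e \<in> {eab, ebc, eac, ra, rb, rc}" using D(11-13) by auto
  next
    fix e assume e: "e \<in> {eab, ebc, eac, ra, rb, rc}"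
    then have "e \<in> Ed G a \<or> e \<in> Ed G b \<or> e \<in> Ed G c" using D(11-13) by auto
    then have "e \<in> gE G \<and> (a \<in> ends G e \<or> b \<in> ends G e \<or> c \<in> ends G e)" unfolding Ed_def by auto
    then show "e \<in> gE H" unfolding H_def using nY by auto
  qed
  have nin: "eab \<notin> cut G ?T" "ebc \<notin> cut G ?T" "eac \<notin> cut G ?T"
  proof -
    have "ends G eab \<subseteq> ?T" "ends G ebc \<subseteq> ?T" "ends G eac \<subseteq> ?T" using D(2,4,6) by auto
    then show "eab \<notin> cut G ?T" "ebc \<notin> cut G ?T" "eac \<notin> cut G ?T"
      using cut_not_inside[OF wf] by blast+
  qed
  have dd: "eab \<noteq> ebc" "eab \<noteq> eac" "ebc \<noteq> eac"
    using D(2,4,6) d by (auto simp: doubleton_eq_iff)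
  have "card {eab, ebc, eac, ra, rb, rc} = 6"
    using dd nin ra_c D(8-10) by (auto simp: card_insert_if)
  then have cE: "card (gE H) = card (gE K4)" using EH card_K4_E by simp
  obtain g where im: "isom H K4 f g" using iso_crit[OF wfH wf_K4 bf ad2 simple_K4 cE] by blast
  have "rep Y \<noteq> a" "rep Y \<noteq> b" "rep Y \<noteq> c" using rYT by auto
  then have "f (rep Y) = 3" unfolding f_def by simp
  then have ia: "iso_at H (rep Y) K4 3" using im unfolding iso_at_isom by blast
  have "(3::nat) \<in> gV K4" by (simp add: K4_V)
  then show ?thesis using ia unfolding H_def Y_def by blast
qed


lemma bip_edge:
  assumes "\<forall>e\<in>gE G - F. card (ends G e \<inter> A) = 1" "e \<in> gE G" "e \<notin> F" "ends G e = {u, v}" "u \<noteq> v"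
  shows "u \<in> A \<longleftrightarrow> v \<notin> A"
proof -
  have "card (ends G e \<inter> A) = 1" using assms(1-3) by blast
  then show ?thesis using cut_iff_2[OF assms(5), of A] assms(4) by simp
qed

lemma tri_hits_F:
  assumes "tri G T" "bipartite (delete_edges G F)"
  shows "\<exists>e\<in>F. e \<in> gE G \<and> ends G e \<subseteq> T"
proof (rule ccontr)
  assume n: "\<not> (\<exists>e\<in>F. e \<in> gE G \<and> ends G e \<subseteq> T)"
  obtain a b c where t: "T = {a, b, c}" "a \<noteq> b" "b \<noteq> c" "a \<noteq> c"
    "adj G a b" "adj G b c" "adj G a c" using assms(1) unfolding tri_def by blast
  obtain A where A: "\<forall>e\<in>gE G - F. card (ends G e \<inter> A) = 1"
    using assms(2) unfolding bipartite_def by auto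
  obtain e1 where e1: "e1 \<in> gE G" "ends G e1 = {a, b}" using t(5) unfolding adj_def by blast
  obtain e2 where e2: "e2 \<in> gE G" "ends G e2 = {b, c}" using t(6) unfolding adj_def by blast
  obtain e3 where e3: "e3 \<in> gE G" "ends G e3 = {a, c}" using t(7) unfolding adj_def by blast
  have nf: "e1 \<notin> F" "e2 \<notin> F" "e3 \<notin> F" using n e1 e2 e3 t(1) by auto
  have "a \<in> A \<longleftrightarrow> b \<notin> A" using bip_edge[OF A e1(1) nf(1) e1(2) t(2)] .
  moreover have "b \<in> A \<longleftrightarrow> c \<notin> A" using bip_edge[OF A e2(1) nf(2) e2(2) t(3)] .
  moreover have "a \<in> A \<longleftrightarrow> c \<notin> A" using bip_edge[OF A e3(1) nf(3) e3(2) t(4)] .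
  ultimately show False by blast
qed

lemma three_tri:
  assumes wf: "wf_graph G" and t: "tri G T1" "tri G T2" "tri G T3"
    and d: "T1 \<inter> T2 = {}" "T1 \<inter> T3 = {}" "T2 \<inter> T3 = {}"
    and F: "finite F" "card F \<le> 2" "bipartite (delete_edges G F)"
  shows False
proof -
  obtain e1 where e1: "e1 \<in> F" "e1 \<in> gE G" "ends G e1 \<subseteq> T1" using tri_hits_F[OF t(1) F(3)] by blast
  obtain e2 where e2: "e2 \<in> F" "e2 \<in> gE G" "ends G e2 \<subseteq> T2" using tri_hits_F[OF t(2) F(3)] by blast
  obtain e3 where e3: "e3 \<in> F" "e3 \<in> gE G" "ends G e3 \<subseteq> T3" using tri_hits_F[OF t(3) F(3)] by blast
  have ne: "ends G e \<noteq> {}" if "e \<in> gE G" for e using wfD(2)[OF wf that] by (intro notI) simp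
  have "e1 \<noteq> e2" using e1 e2 d(1) ne[OF e1(2)] by blast
  moreover have "e1 \<noteq> e3" using e1 e3 d(2) ne[OF e1(2)] by blast
  moreover have "e2 \<noteq> e3" using e2 e3 d(3) ne[OF e2(2)] by blast
  ultimately have "card {e1, e2, e3} = 3" by simp
  moreover have "card {e1, e2, e3} \<le> card F" using e1 e2 e3 F(1) by (intro card_mono) auto
  ultimately show False using F(2) by simp
qed

lemma trans_core:
  assumes wf: "wf_graph G" and T: "T = {a, b, c}" "T \<subseteq> gV G"
    and A: "A \<subseteq> gV G" "\<forall>e\<in>gE G - F. card (ends G e \<inter> A) = 1"
    and ab: "a \<in> A \<longleftrightarrow> b \<in> A"
    and rc: "\<forall>e\<in>cut G T. c \<in> ends G e \<longrightarrow> e = r"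
    and e0: "e0 \<in> F" "ends G e0 \<subseteq> T"
    and F: "finite F" "card F \<le> 2"
  shows "\<exists>F'. finite F' \<and> card F' \<le> 2 \<and> bipartite (delete_edges (contract G T) F')"
proof -
  have Tne: "T \<noteq> {}" using T(1) by simp
  have rT: "rep T \<in> T" using rep_in[OF Tne] .
  define A' where "A' = (A - T) \<union> (if a \<in> A then {rep T} else {})"
  define F' where "F' = (F - {e0}) \<union> {r}"
  have fF': "finite F'" unfolding F'_def using F(1) by simp
  have "card F' \<le> card (F - {e0}) + 1" unfolding F'_def using card_Un_le[of "F - {e0}" "{r}"] by simp
  moreover have "card (F - {e0}) = card F - 1" using e0(1) F(1) by simp
  ultimately have cF': "card F' \<le> 2" using F(2) e0(1) F(1) by (cases "card F") auto
  have A'V: "A' \<subseteq> gV (contract G T)" unfolding A'_def using A(1) by auto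
  have memA: "cl T w \<in> A' \<longleftrightarrow> (if w \<in> T then a \<in> A else w \<in> A)" for w
    unfolding A'_def using rT by auto
  have edges: "card (ends (contract G T) e \<inter> A') = 1" if e: "e \<in> gE (contract G T) - F'" for e
  proof -
    have eE: "e \<in> gE G" and nT: "\<not> ends G e \<subseteq> T" and nF': "e \<notin> F'" using e by auto
    have ne0: "e \<noteq> e0" using nT e0(2) by auto
    have nF: "e \<notin> F" using nF' ne0 unfolding F'_def by auto
    have nr: "e \<noteq> r" using nF' unfolding F'_def by auto
    obtain p q where pq: "p \<noteq> q" "ends G e = {p, q}" using wfD(4)[OF wf eE] by blast
    have bp: "p \<in> A \<longleftrightarrow> q \<notin> A" using bip_edge[OF A(2) eE nF pq(2) pq(1)] .
    have img: "ends (contract G T) e = {cl T p, cl T q}" using pq(2) by simp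
    have nboth: "\<not> (p \<in> T \<and> q \<in> T)" using nT pq(2) by auto
    have ne: "cl T p \<noteq> cl T q" using nboth pq(1) rT by (auto split: if_splits)
    have key: "cl T p \<in> A' \<longleftrightarrow> cl T q \<notin> A'"
    proof (cases "p \<in> T")
      case True
      then have qT: "q \<notin> T" using nboth by auto
      have "e \<in> cut G T" unfolding cut_def using eE cut_iff_2[OF pq(1), of T] pq(2) True qT by simp
      then have "p \<noteq> c" using rc nr pq(2) by auto
      then have "p \<in> A \<longleftrightarrow> a \<in> A" using True T(1) ab by auto
      then show ?thesis using memA[of p] memA[of q] True qT bp by simp
    next
      case False
      show ?thesis
      proof (cases "q \<in> T")
        case True
        have "e \<in> cut G T" unfolding cut_def using eE cut_iff_2[OF pq(1), of T] pq(2) True False by simp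
        then have "q \<noteq> c" using rc nr pq(2) by auto
        then have "q \<in> A \<longleftrightarrow> a \<in> A" using True T(1) ab by auto
        then show ?thesis using memA[of p] memA[of q] True False bp by simp
      next
        case F2: False
        then show ?thesis using memA[of p] memA[of q] False bp by simp
      qed
    qed
    show ?thesis using cut_iff_2[OF ne, of A'] img key by simp
  qed
  have "bipartite (delete_edges (contract G T) F')"
    unfolding bipartite_def using A'V edges by auto
  then show ?thesis using fF' cF' by blast
qed

lemma trans_contract:
  assumes wf: "wf_graph G" and cub: "cubic G" and ec: "ec3 G"
    and V: "a \<in> gV G" "b \<in> gV G" "c \<in> gV G" and d: "a \<noteq> b" "b \<noteq> c" "a \<noteq> c"
    and ad: "adj G a b" "adj G b c" "adj G a c" and c4: "card (gV G) \<ge> 4"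
    and F: "finite F" "card F \<le> 2" "bipartite (delete_edges G F)"
  shows "\<exists>F'. finite F' \<and> card F' \<le> 2 \<and> bipartite (delete_edges (contract G {a, b, c}) F')"
proof -
  let ?T = "{a, b, c}"
  obtain eab ebc eac ra rb rc where D:
    "eab \<in> gE G" "ends G eab = {a, b}" "ebc \<in> gE G" "ends G ebc = {b, c}"
    "eac \<in> gE G" "ends G eac = {a, c}"
    "cut G ?T = {ra, rb, rc}" "ra \<noteq> rb" "rb \<noteq> rc" "ra \<noteq> rc"
    "Ed G a = {eab, eac, ra}" "Ed G b = {eab, ebc, rb}" "Ed G c = {eac, ebc, rc}"
    using tri_data[OF wf cub ec V d ad c4] by blast
  have ins: "eab \<notin> cut G ?T" "ebc \<notin> cut G ?T" "eac \<notin> cut G ?T"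
  proof -
    have "ends G eab \<subseteq> ?T" "ends G ebc \<subseteq> ?T" "ends G eac \<subseteq> ?T" using D(2,4,6) by auto
    then show "eab \<notin> cut G ?T" "ebc \<notin> cut G ?T" "eac \<notin> cut G ?T"
      using cut_not_inside[OF wf] by blast+
  qed
  have uq: "\<forall>e\<in>cut G ?T. x \<in> ends G e \<longrightarrow> e = r" if "Ed G x = {e1, e2, r}" "e1 \<notin> cut G ?T" "e2 \<notin> cut G ?T" for x e1 e2 r
  proof (intro ballI impI)
    fix e assume "e \<in> cut G ?T" "x \<in> ends G e"
    then have "e \<in> Ed G x" unfolding Ed_def cut_def by auto
    then show "e = r" using that \<open>e \<in> cut G ?T\<close> by auto
  qed
  have ua: "\<forall>e\<in>cut G ?T. a \<in> ends G e \<longrightarrow> e = ra" using uq[OF D(11) ins(1) ins(3)] .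
  have ub: "\<forall>e\<in>cut G ?T. b \<in> ends G e \<longrightarrow> e = rb" using uq[OF D(12) ins(1) ins(2)] .
  have uc: "\<forall>e\<in>cut G ?T. c \<in> ends G e \<longrightarrow> e = rc" using uq[OF D(13) ins(3) ins(2)] .
  obtain A where A: "A \<subseteq> gV G" "\<forall>e\<in>gE G - F. card (ends G e \<inter> A) = 1"
    using F(3) unfolding bipartite_def by auto
  have tT: "tri G ?T" unfolding tri_def using V d ad by blast
  obtain e0 where e0: "e0 \<in> F" "e0 \<in> gE G" "ends G e0 \<subseteq> ?T" using tri_hits_F[OF tT F(3)] by blast
  have TV: "?T \<subseteq> gV G" using V by auto
  have "(a \<in> A \<longleftrightarrow> b \<in> A) \<or> (a \<in> A \<longleftrightarrow> c \<in> A) \<or> (b \<in> A \<longleftrightarrow> c \<in> A)" by blast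
  then show ?thesis
  proof (elim disjE)
    assume h: "a \<in> A \<longleftrightarrow> b \<in> A"
    show ?thesis using trans_core[OF wf refl TV A h uc e0(1,3) F(1,2)] .
  next
    assume h: "a \<in> A \<longleftrightarrow> c \<in> A"
    have e: "{a, c, b} = ?T" by auto
    show ?thesis using trans_core[OF wf refl, of a c b] TV A h ub e0(1,3) F(1,2) e by simp
  next
    assume h: "b \<in> A \<longleftrightarrow> c \<in> A"
    have e: "{b, c, a} = ?T" by auto
    show ?thesis using trans_core[OF wf refl, of b c a] TV A h ua e0(1,3) F(1,2) e by simp
  qed
qed

subsection \<open>Bricks are 3-edge-connected\<close>

lemma ec_core:
  assumes wf: "wf_graph G" and kc: "k_connected 3 G"
    and Y: "Y \<subseteq> gV G" "Y \<noteq> {}" "card (gV G - Y) \<ge> 3" and c2: "card (cut G Y) \<le> 2"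
  shows False
proof -
  define S where "S = {w \<in> gV G - Y. \<exists>e\<in>cut G Y. w \<in> ends G e}"
  have fin: "finite (gV G)" using wf_fin(1)[OF wf] .
  have fc: "finite (cut G Y)" using wf_fin(2)[OF wf] unfolding cut_def by auto
  have one: "card (ends G e - Y) = 1" if e: "e \<in> cut G Y" for e
  proof -
    have eE: "e \<in> gE G" and c1: "card (ends G e \<inter> Y) = 1" using e unfolding cut_def by auto
    have f2: "finite (ends G e)" "card (ends G e) = 2" using wfD[OF wf eE] by auto
    have "ends G e - Y = ends G e - (ends G e \<inter> Y)" by auto
    then show ?thesis using card_Diff_subset[of "ends G e \<inter> Y" "ends G e"] f2 c1 by simp
  qed
  have SU: "S \<subseteq> (\<Union>e\<in>cut G Y. ends G e - Y)" unfolding S_def by auto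
  have "card (\<Union>e\<in>cut G Y. ends G e - Y) \<le> (\<Sum>e\<in>cut G Y. card (ends G e - Y))"
    by (rule card_UN_le[OF fc])
  also have "\<dots> = card (cut G Y)" using one by simp
  finally have cU: "card (\<Union>e\<in>cut G Y. ends G e - Y) \<le> card (cut G Y)" .
  have fU: "finite (\<Union>e\<in>cut G Y. ends G e - Y)"
    using fc one by (intro finite_UN_I) (auto intro: card_ge_0_finite)
  have cS: "card S \<le> 2" using card_mono[OF fU SU] cU c2 by simp
  have SV: "S \<subseteq> gV G" unfolding S_def by auto
  have con: "connected (delete_verts G S)" using kc SV cS unfolding k_connected_def by auto
  obtain y where y: "y \<in> Y" using Y(2) by blast
  have "card (gV G - Y - S) > 0"
  proof -
    have "gV G - Y \<subseteq> (gV G - Y - S) \<union> S" by blast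
    then have "card (gV G - Y) \<le> card ((gV G - Y - S) \<union> S)"
      using fin SV by (intro card_mono) (auto intro: finite_subset)
    also have "\<dots> \<le> card (gV G - Y - S) + card S" by (rule card_Un_le)
    finally have "card (gV G - Y) \<le> card (gV G - Y - S) + card S" .
    then show ?thesis using Y(3) cS by simp
  qed
  then obtain w where w: "w \<in> gV G - Y - S" by (metis card_gt_0_iff ex_in_conv)
  have yV: "y \<in> gV (delete_verts G S)" using y Y(1) unfolding S_def by auto
  have wV: "w \<in> gV (delete_verts G S)" using w by auto
  have path: "(adj (delete_verts G S))\<^sup>*\<^sup>* y w" using con yV wV unfolding connected_def by blast
  have "z \<in> Y" if "(adj (delete_verts G S))\<^sup>*\<^sup>* y z" for z
    using that
  proof (induction rule: rtranclp_induct)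
    case base then show ?case using y .
  next
    case (step z z')
    obtain e where e: "e \<in> gE G" "ends G e \<inter> S = {}" "ends G e = {z, z'}"
      using step(2) unfolding adj_def by auto
    show ?case
    proof (rule ccontr)
      assume nz: "z' \<notin> Y"
      have zz: "z \<noteq> z'" using step(3) nz by auto
      have z'V: "z' \<in> gV G" using wfD(1)[OF wf e(1)] e(3) by auto
      have "e \<in> cut G Y" unfolding cut_def using e(1) e(3) cut_iff_2[OF zz, of Y] step(3) nz by simp
      then have "z' \<in> S" unfolding S_def using z'V nz e(3) by auto
      then show False using e(2,3) by auto
    qed
  qed
  then have "w \<in> Y" using path by blast
  then show False using w by auto
qed

lemma brick_ec3:
  assumes wf: "wf_graph G" and kc: "k_connected 3 G" and c6: "card (gV G) \<ge> 6"
  shows "ec3 G"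
  unfolding ec3_def
proof (intro allI impI)
  fix Y assume Y: "Y \<subseteq> gV G" "Y \<noteq> {}" "gV G - Y \<noteq> {}"
  have fin: "finite (gV G)" using wf_fin(1)[OF wf] .
  show "card (cut G Y) \<ge> 3"
  proof (rule ccontr)
    assume "\<not> card (cut G Y) \<ge> 3"
    then have c2: "card (cut G Y) \<le> 2" by simp
    have cs: "card (gV G) = card Y + card (gV G - Y)"
      using card_Diff_subset[OF finite_subset[OF Y(1) fin] Y(1)] card_mono[OF fin Y(1)] by simp
    show False
    proof (cases "card (gV G - Y) \<ge> 3")
      case True show False using ec_core[OF wf kc Y(1,2) True c2] .
    next
      case False
      then have cY: "card (gV G - (gV G - Y)) \<ge> 3" using cs c6 Y(1) by (simp add: double_diff)
      have "cut G (gV G - Y) = cut G Y" using cut_compl[OF wf Y(1)] .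
      then show False using ec_core[OF wf kc _ Y(3) cY] c2 by simp
    qed
  qed
qed


lemma less6: "(j::nat) < 6 \<longleftrightarrow> j=0 \<or> j=1 \<or> j=2 \<or> j=3 \<or> j=4 \<or> j=5" by presburger
lemma C6bar_E: "gE C6bar = {(0,2),(0,3),(0,4),(1,3),(1,4),(1,5),(2,4),(2,5),(3,5)}"
proof (rule set_eqI)
  fix x :: "nat \<times> nat"
  obtain i j where x: "x = (i, j)" by (cases x)
  have "(i < j \<and> j < 6 \<and> j - i \<noteq> 1 \<and> j - i \<noteq> 5) \<longleftrightarrow>
        (i, j) \<in> {(0,2),(0,3),(0,4),(1,3),(1,4),(1,5),(2,4),(2,5),(3,5)}"
  proof
    assume a: "i < j \<and> j < 6 \<and> j - i \<noteq> 1 \<and> j - i \<noteq> 5"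
    then have "i < 6" "j < 6" by auto
    then have "(i=0 \<or> i=1 \<or> i=2 \<or> i=3 \<or> i=4 \<or> i=5) \<and> (j=0 \<or> j=1 \<or> j=2 \<or> j=3 \<or> j=4 \<or> j=5)"
      unfolding less6 by blast
    then show "(i, j) \<in> {(0,2),(0,3),(0,4),(1,3),(1,4),(1,5),(2,4),(2,5),(3,5)}" using a
      by (elim conjE disjE) simp_all
  next
    assume "(i, j) \<in> {(0,2),(0,3),(0,4),(1,3),(1,4),(1,5),(2,4),(2,5),(3,5)}"
    then show "i < j \<and> j < 6 \<and> j - i \<noteq> 1 \<and> j - i \<noteq> 5" by (elim insertE) auto
  qed
  then show "x \<in> gE C6bar \<longleftrightarrow> x \<in> {(0,2),(0,3),(0,4),(1,3),(1,4),(1,5),(2,4),(2,5),(3,5)}"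
    unfolding C6bar_def x by simp
qed

lemma C6bar_V: "gV C6bar = {0..<6}" unfolding C6bar_def by simp

lemma C6bar_ends: "ends C6bar (i, j) = {i, j}" unfolding C6bar_def by simp

lemma wf_C6bar: "wf_graph C6bar"
  unfolding wf_graph_def C6bar_E C6bar_V by (simp add: C6bar_ends)

lemma C6bar_simple: "simple C6bar"
  unfolding simple_def
proof (intro ballI impI)
  fix e1 e2 assume e: "e1 \<in> gE C6bar" "e2 \<in> gE C6bar" "ends C6bar e1 = ends C6bar e2"
  obtain i j where ij: "e1 = (i, j)" "i < j" using e(1) unfolding C6bar_def by auto
  obtain k l where kl: "e2 = (k, l)" "k < l" using e(2) unfolding C6bar_def by auto
  have "{i, j} = {k, l}" using e(3) ij kl by (simp add: C6bar_ends)
  then have "(i = k \<and> j = l) \<or> (i = l \<and> j = k)" by (simp add: doubleton_eq_iff)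
  then show "e1 = e2" using ij kl by auto
qed

lemma C6bar_cardE: "card (gE C6bar) = 9" by (simp add: C6bar_E)

lemma C6bar_adj: "adj C6bar i j \<longleftrightarrow> (i, j) \<in> gE C6bar \<or> (j, i) \<in> gE C6bar"
proof
  assume "adj C6bar i j"
  then obtain e where e: "e \<in> gE C6bar" "ends C6bar e = {i, j}" unfolding adj_def by blast
  obtain p q where pq: "e = (p, q)" by (cases e)
  then have "{p, q} = {i, j}" using e(2) by (simp add: C6bar_ends)
  then have "(p = i \<and> q = j) \<or> (p = j \<and> q = i)" by (simp add: doubleton_eq_iff)
  then show "(i, j) \<in> gE C6bar \<or> (j, i) \<in> gE C6bar" using e(1) pq by auto
next
  assume "(i, j) \<in> gE C6bar \<or> (j, i) \<in> gE C6bar"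
  then show "adj C6bar i j" unfolding adj_def
  proof
    assume "(i, j) \<in> gE C6bar" then show "\<exists>e\<in>gE C6bar. ends C6bar e = {i, j}"
      by (intro bexI[of _ "(i,j)"]) (auto simp: C6bar_ends)
  next
    assume "(j, i) \<in> gE C6bar" then show "\<exists>e\<in>gE C6bar. ends C6bar e = {i, j}"
      by (intro bexI[of _ "(j,i)"]) (auto simp: C6bar_ends insert_commute)
  qed
qed

lemma tri_adj: assumes "tri G T" "u \<in> T" "v \<in> T" "u \<noteq> v" shows "adj G u v"
proof -
  obtain a b c where t: "T = {a, b, c}" "adj G a b" "adj G b c" "adj G a c"
    using assms(1) unfolding tri_def by blast
  have s: "adj G b a" "adj G c b" "adj G c a" using t(2-4) adj_sym by metis+
  show ?thesis using assms(2-4) t s by auto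
qed

lemma tri_card: "tri G T \<Longrightarrow> card T = 3"
  unfolding tri_def by auto

lemma tri_sub: "tri G T \<Longrightarrow> T \<subseteq> gV G"
  unfolding tri_def by auto

lemma no_self_adj: "wf_graph G \<Longrightarrow> \<not> adj G u u"
proof
  assume "wf_graph G" "adj G u u"
  then obtain e where "e \<in> gE G" "ends G e = {u}" unfolding adj_def by auto
  then show False using wfD(2)[OF \<open>wf_graph G\<close>] by fastforce
qed

lemma tri_unique_cut:
  assumes wf: "wf_graph G" and cub: "cubic G" and ec: "ec3 G" and t: "tri G T" and c4: "card (gV G) \<ge> 4"
    and w: "w \<in> T" and e: "e1 \<in> cut G T" "w \<in> ends G e1" "e2 \<in> cut G T" "w \<in> ends G e2"
  shows "e1 = e2"
proof -
  obtain a b c where t': "T = {a, b, c}" "a \<noteq> b" "b \<noteq> c" "a \<noteq> c"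
    "a \<in> gV G" "b \<in> gV G" "c \<in> gV G" "adj G a b" "adj G b c" "adj G a c" using t unfolding tri_def by blast
  obtain eab ebc eac ra rb rc where D:
    "eab \<in> gE G" "ends G eab = {a, b}" "ebc \<in> gE G" "ends G ebc = {b, c}"
    "eac \<in> gE G" "ends G eac = {a, c}"
    "cut G {a,b,c} = {ra, rb, rc}" "ra \<noteq> rb" "rb \<noteq> rc" "ra \<noteq> rc"
    "Ed G a = {eab, eac, ra}" "Ed G b = {eab, ebc, rb}" "Ed G c = {eac, ebc, rc}"
    using tri_data[OF wf cub ec t'(5-7) t'(2-4) t'(8-10) c4] by blast
  have ins: "eab \<notin> cut G T" "ebc \<notin> cut G T" "eac \<notin> cut G T"
  proof -
    have "ends G eab \<subseteq> T" "ends G ebc \<subseteq> T" "ends G eac \<subseteq> T" using D(2,4,6) t'(1) by auto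
    then show "eab \<notin> cut G T" "ebc \<notin> cut G T" "eac \<notin> cut G T"
      using cut_not_inside[OF wf] by blast+
  qed
  have inEd: "e1 \<in> Ed G w" "e2 \<in> Ed G w" using e unfolding Ed_def cut_def by auto
  show ?thesis
  proof -
    have "w = a \<or> w = b \<or> w = c" using w t'(1) by auto
    then show ?thesis
    proof (elim disjE)
      assume "w = a" then show ?thesis using inEd D(11) ins e(1,3) t'(1) by auto
    next
      assume "w = b" then show ?thesis using inEd D(12) ins e(1,3) t'(1) by auto
    next
      assume "w = c" then show ?thesis using inEd D(13) ins e(1,3) t'(1) by auto
    qed
  qed
qed

lemma other_end:
  assumes wf: "wf_graph G" and r: "r \<in> cut G T" and x: "x \<in> T" "x \<in> ends G r"
  obtains y where "ends G r = {x, y}" "y \<in> gV G - T"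
proof -
  have rE: "r \<in> gE G" using r unfolding cut_def by auto
  obtain p q where pq: "p \<noteq> q" "ends G r = {p, q}" using wfD(4)[OF wf rE] by blast
  have "card (ends G r \<inter> T) = 1" using r unfolding cut_def by auto
  then have pqT: "(p \<in> T \<longleftrightarrow> q \<notin> T)" using cut_iff_2[OF pq(1)] pq(2) by simp
  have sV: "ends G r \<subseteq> gV G" using wfD(1)[OF wf rE] .
  show ?thesis
  proof (cases "x = p")
    case True then show ?thesis using that pq pqT x sV by auto
  next
    case False then have "x = q" using x(2) pq(2) by auto
    then show ?thesis using that pq pqT x sV by (auto simp: insert_commute)
  qed
qed


lemma base6:
  assumes wf: "wf_graph G" and cub: "cubic G" and ec: "ec3 G" and c6: "card (gV G) = 6"
    and t1: "tri G T1" and t2: "tri G T2" and dj: "T1 \<inter> T2 = {}"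
  shows "iso G C6bar"
proof -
  have c4: "card (gV G) \<ge> 4" using c6 by simp
  have fin: "finite (gV G)" using wf_fin(1)[OF wf] .
  obtain a1 a2 a3 where t: "T1 = {a1, a2, a3}" "a1 \<noteq> a2" "a2 \<noteq> a3" "a1 \<noteq> a3"
    "a1 \<in> gV G" "a2 \<in> gV G" "a3 \<in> gV G" "adj G a1 a2" "adj G a2 a3" "adj G a1 a3"
    using t1 unfolding tri_def by blast
  obtain e12 e23 e13 r1 r2 r3 where D:
    "e12 \<in> gE G" "ends G e12 = {a1, a2}" "e23 \<in> gE G" "ends G e23 = {a2, a3}"
    "e13 \<in> gE G" "ends G e13 = {a1, a3}"
    "cut G T1 = {r1, r2, r3}" "r1 \<noteq> r2" "r2 \<noteq> r3" "r1 \<noteq> r3"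
    "Ed G a1 = {e12, e13, r1}" "Ed G a2 = {e12, e23, r2}" "Ed G a3 = {e13, e23, r3}"
    using tri_data[OF wf cub ec t(5-7) t(2-4) t(8-10) c4] t(1) by blast
  have T1V: "T1 \<subseteq> gV G" and T2V: "T2 \<subseteq> gV G" using tri_sub t1 t2 by auto
  have cT: "card T1 = 3" "card T2 = 3" using tri_card t1 t2 by auto
  have fT: "finite T1" "finite T2" using T1V T2V fin finite_subset by auto
  have "card (T1 \<union> T2) = 6" using card_Un_disjoint[OF fT dj] cT by simp
  then have VU: "gV G = T1 \<union> T2" using card_subset_eq[OF fin, of "T1 \<union> T2"] T1V T2V c6 by simp
  have T2c: "T2 = gV G - T1" using VU dj by auto
  have cut12: "cut G T2 = cut G T1" using cut_compl[OF wf T1V] T2c by simp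
  have rc: "r1 \<in> cut G T1" "r2 \<in> cut G T1" "r3 \<in> cut G T1" using D(7) by auto
  have ra: "a1 \<in> ends G r1" "a2 \<in> ends G r2" "a3 \<in> ends G r3" using D(11-13) unfolding Ed_def by auto
  have aT: "a1 \<in> T1" "a2 \<in> T1" "a3 \<in> T1" using t(1) by auto
  obtain b1 where b1: "ends G r1 = {a1, b1}" "b1 \<in> gV G - T1" using other_end[OF wf rc(1) aT(1) ra(1)] by blast
  obtain b2 where b2: "ends G r2 = {a2, b2}" "b2 \<in> gV G - T1" using other_end[OF wf rc(2) aT(2) ra(2)] by blast
  obtain b3 where b3: "ends G r3 = {a3, b3}" "b3 \<in> gV G - T1" using other_end[OF wf rc(3) aT(3) ra(3)] by blast
  have bT: "b1 \<in> T2" "b2 \<in> T2" "b3 \<in> T2" using b1 b2 b3 T2c by auto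
  have uc: "e1 = e2" if "w \<in> T2" "e1 \<in> cut G T2" "w \<in> ends G e1" "e2 \<in> cut G T2" "w \<in> ends G e2" for w e1 e2
    using tri_unique_cut[OF wf cub ec t2 c4 that] .
  have rc2: "r1 \<in> cut G T2" "r2 \<in> cut G T2" "r3 \<in> cut G T2" using rc cut12 by auto
  have rb: "b1 \<in> ends G r1" "b2 \<in> ends G r2" "b3 \<in> ends G r3" using b1 b2 b3 by auto
  have db: "b1 \<noteq> b2" "b2 \<noteq> b3" "b1 \<noteq> b3"
  proof -
    show "b1 \<noteq> b2" using uc[OF bT(1) rc2(1) rb(1) rc2(2)] rb(2) D(8) by blast
    show "b2 \<noteq> b3" using uc[OF bT(2) rc2(2) rb(2) rc2(3)] rb(3) D(9) by blast
    show "b1 \<noteq> b3" using uc[OF bT(1) rc2(1) rb(1) rc2(3)] rb(3) D(10) by blast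
  qed
  have T2e: "T2 = {b1, b2, b3}"
  proof -
    have "{b1, b2, b3} \<subseteq> T2" using bT by auto
    moreover have "card {b1, b2, b3} = 3" using db by simp
    ultimately show ?thesis using card_subset_eq[OF fT(2)] cT(2) by metis
  qed
  have dab: "a1 \<noteq> b1" "a1 \<noteq> b2" "a1 \<noteq> b3" "a2 \<noteq> b1" "a2 \<noteq> b2" "a2 \<noteq> b3"
     "a3 \<noteq> b1" "a3 \<noteq> b2" "a3 \<noteq> b3" using aT bT dj by auto
  have pa: "adj G a1 a2" "adj G a2 a3" "adj G a1 a3" using t by auto
  have pb: "adj G b1 b2" "adj G b2 b3" "adj G b1 b3" using tri_adj[OF t2] bT db by auto
  have pr: "adj G a1 b1" "adj G a2 b2" "adj G a3 b3" unfolding adj_def using D(7) b1 b2 b3 rc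
    unfolding cut_def by auto
  have nadj: "\<not> adj G a v" if "Ed G a = {x, y, r}" "ends G x \<subseteq> T1" "ends G y \<subseteq> T1" "ends G r = {a, b}"
     "v \<in> T2" "v \<noteq> b" "a \<in> T1" for a v x y r b
  proof
    assume "adj G a v"
    then obtain e where e: "e \<in> gE G" "ends G e = {a, v}" unfolding adj_def by blast
    then have "e \<in> Ed G a" unfolding Ed_def by auto
    moreover have "\<not> ends G e \<subseteq> T1" using e(2) that(5) dj by auto
    ultimately have "e = r" using that(1-3) by auto
    then have "{a, v} = {a, b}" using e(2) that(4) by simp
    then show False using that(5-7) dj by (auto simp: doubleton_eq_iff)
  qed
  have inT1: "ends G e12 \<subseteq> T1" "ends G e23 \<subseteq> T1" "ends G e13 \<subseteq> T1" using D(2,4,6) t(1) by auto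
  have na: "\<not> adj G a1 b2" "\<not> adj G a1 b3" "\<not> adj G a2 b1" "\<not> adj G a2 b3" "\<not> adj G a3 b1" "\<not> adj G a3 b2"
  proof -
    show "\<not> adj G a1 b2" using nadj[OF D(11) inT1(1) inT1(3) b1(1) bT(2) db(1)[symmetric] aT(1)] .
    show "\<not> adj G a1 b3" using nadj[OF D(11) inT1(1) inT1(3) b1(1) bT(3) db(3)[symmetric] aT(1)] .
    show "\<not> adj G a2 b1" using nadj[OF D(12) inT1(1) inT1(2) b2(1) bT(1) db(1) aT(2)] .
    show "\<not> adj G a2 b3" using nadj[OF D(12) inT1(1) inT1(2) b2(1) bT(3) db(2)[symmetric] aT(2)] .
    show "\<not> adj G a3 b1" using nadj[OF D(13) inT1(3) inT1(2) b3(1) bT(1) db(3) aT(3)] .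
    show "\<not> adj G a3 b2" using nadj[OF D(13) inT1(3) inT1(2) b3(1) bT(2) db(2) aT(3)] .
  qed
  have ns: "\<not> adj G u u" for u using no_self_adj[OF wf] .
  have V6: "gV G = {a1, a2, a3, b1, b2, b3}" using VU t(1) T2e by auto
  define f where "f = (\<lambda>x. if x = a1 then 0 else if x = a2 then 2 else if x = a3 then 4
     else if x = b1 then 3 else if x = b2 then (5::nat) else 1)"
  have fv: "f a1 = 0" "f a2 = 2" "f a3 = 4" "f b1 = 3" "f b2 = 5" "f b3 = 1"
    unfolding f_def using t(2-4) db dab by auto
  have bf: "bij_betw f (gV G) (gV C6bar)"
    unfolding bij_betw_def V6 C6bar_V
  proof
    show "inj_on f {a1, a2, a3, b1, b2, b3}" unfolding inj_on_def using fv by auto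
    show "f ` {a1, a2, a3, b1, b2, b3} = {0..<6}" using fv by (auto simp: less6)
  qed
  have sym: "adj G v u \<longleftrightarrow> adj G u v" for u v using adj_sym by metis
  have ad: "\<forall>u\<in>gV G. \<forall>v\<in>gV G. adj C6bar (f u) (f v) \<longleftrightarrow> adj G u v"
    unfolding V6 using fv pa pb pr na ns
    by (simp add: C6bar_adj C6bar_E sym)
  have t2': "b1 \<in> gV G" "b2 \<in> gV G" "b3 \<in> gV G" using bT T2V by auto
  obtain f12 f23 f13 s1 s2 s3 where D2:
    "f12 \<in> gE G" "ends G f12 = {b1, b2}" "f23 \<in> gE G" "ends G f23 = {b2, b3}"
    "f13 \<in> gE G" "ends G f13 = {b1, b3}"
    "cut G T2 = {s1, s2, s3}" "s1 \<noteq> s2" "s2 \<noteq> s3" "s1 \<noteq> s3"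
    "Ed G b1 = {f12, f13, s1}" "Ed G b2 = {f12, f23, s2}" "Ed G b3 = {f13, f23, s3}"
    using tri_data[OF wf cub ec t2' db(1,2,3) pb c4] T2e by blast
  have EU: "gE G = {e12, e23, e13} \<union> {f12, f23, f13} \<union> {r1, r2, r3}"
  proof (intro equalityI subsetI)
    fix e assume e: "e \<in> gE G"
    obtain p q where pq: "p \<noteq> q" "ends G e = {p, q}" using wfD(4)[OF wf e] by blast
    have "p \<in> gV G" using wfD(1)[OF wf e] pq(2) by auto
    then have "e \<in> Ed G a1 \<or> e \<in> Ed G a2 \<or> e \<in> Ed G a3 \<or> e \<in> Ed G b1 \<or> e \<in> Ed G b2 \<or> e \<in> Ed G b3"
      using e pq(2) V6 unfolding Ed_def by auto
    moreover have sr: "{s1, s2, s3} = {r1, r2, r3}" using D(7) D2(7) cut12 by simp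
    then have sr': "s1 \<in> {r1, r2, r3}" "s2 \<in> {r1, r2, r3}" "s3 \<in> {r1, r2, r3}" by blast+
    ultimately show "e \<in> {e12, e23, e13} \<union> {f12, f23, f13} \<union> {r1, r2, r3}"
    proof (elim disjE)
      assume "e \<in> Ed G a1" then show ?thesis using D(11) by auto
    next
      assume "e \<in> Ed G a2" then show ?thesis using D(12) by auto
    next
      assume "e \<in> Ed G a3" then show ?thesis using D(13) by auto
    next
      assume "e \<in> Ed G b1" then show ?thesis using D2(11) sr'(1) by auto
    next
      assume "e \<in> Ed G b2" then show ?thesis using D2(12) sr'(2) by auto
    next
      assume "e \<in> Ed G b3" then show ?thesis using D2(13) sr'(3) by auto
    qed
  next
    fix e assume "e \<in> {e12, e23, e13} \<union> {f12, f23, f13} \<union> {r1, r2, r3}"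
    then show "e \<in> gE G" using D(1,3,5) D2(1,3,5) rc unfolding cut_def by auto
  qed
  have c1: "card {e12, e23, e13} = 3" using D(2,4,6) t(2-4) by (auto simp: doubleton_eq_iff card_insert_if)
  have c2: "card {f12, f23, f13} = 3" using D2(2,4,6) db by (auto simp: doubleton_eq_iff card_insert_if)
  have c3: "card {r1, r2, r3} = 3" using D(8-10) by simp
  have inT2: "ends G f12 \<subseteq> T2" "ends G f23 \<subseteq> T2" "ends G f13 \<subseteq> T2" using D2(2,4,6) T2e by auto
  have ne: "ends G e \<noteq> {}" if "e \<in> gE G" for e using wfD(2)[OF wf that] by (intro notI) simp
  have d12: "{e12, e23, e13} \<inter> {f12, f23, f13} = {}"
  proof -
    have "x \<noteq> y" if "x \<in> {e12, e23, e13}" "y \<in> {f12, f23, f13}" for x y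
    proof
      assume xy: "x = y"
      have "ends G x \<subseteq> T1" "x \<in> gE G" using that(1) inT1 D(1,3,5) by auto
      moreover have "ends G y \<subseteq> T2" using that(2) inT2 by auto
      ultimately show False using xy dj ne by blast
    qed
    then show ?thesis by blast
  qed
  have d3: "({e12, e23, e13} \<union> {f12, f23, f13}) \<inter> {r1, r2, r3} = {}"
  proof -
    have "x \<notin> cut G T1" if "ends G x \<subseteq> T1" for x using cut_not_inside[OF wf] that by blast
    moreover have "x \<notin> cut G T2" if "ends G x \<subseteq> T2" for x using cut_not_inside[OF wf] that by blast
    ultimately have n: "e12 \<notin> cut G T1" "e23 \<notin> cut G T1" "e13 \<notin> cut G T1"
      "f12 \<notin> cut G T1" "f23 \<notin> cut G T1" "f13 \<notin> cut G T1" using inT1 inT2 cut12 by auto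
    have rr: "{r1, r2, r3} = cut G T1" using D(7) by simp
    show ?thesis unfolding rr using n by auto
  qed
  have "card (gE G) = 9"
    unfolding EU using card_Un_disjoint[OF _ _ d3] card_Un_disjoint[OF _ _ d12] c1 c2 c3 by simp
  then have cE: "card (gE G) = card (gE C6bar)" using C6bar_cardE by simp
  obtain g where "isom G C6bar f g" using iso_crit[OF wf wf_C6bar bf ad C6bar_simple cE] by blast
  then show ?thesis using iso_isom by blast
qed


lemma K4crit:
  assumes wf: "wf_graph H" and V: "gV H = {p, q, s, t}"
    and d: "p \<noteq> q" "p \<noteq> s" "p \<noteq> t" "q \<noteq> s" "q \<noteq> t" "s \<noteq> t"
    and cpl: "\<forall>u\<in>gV H. \<forall>v\<in>gV H. u \<noteq> v \<longrightarrow> adj H u v" and cE: "card (gE H) = 6"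
  shows "iso H K4"
proof -
  define f where "f = (\<lambda>x. if x = p then 0 else if x = q then 1 else if x = s then 2 else (3::nat))"
  have fv: "f p = 0" "f q = 1" "f s = 2" "f t = 3" unfolding f_def using d by auto
  have bf: "bij_betw f (gV H) (gV K4)"
    unfolding bij_betw_def V K4_V
  proof
    show "inj_on f {p, q, s, t}" unfolding inj_on_def using fv by auto
    show "f ` {p, q, s, t} = {0..<4}" using fv by (auto simp: less4)
  qed
  have injf: "inj_on f (gV H)" using bf by (simp add: bij_betw_def)
  have fr: "f u \<in> gV K4" if "u \<in> gV H" for u using bf that by (auto simp: bij_betw_def)
  have ad: "\<forall>u\<in>gV H. \<forall>v\<in>gV H. adj K4 (f u) (f v) \<longleftrightarrow> adj H u v"
  proof (intro ballI)
    fix u v assume uv: "u \<in> gV H" "v \<in> gV H"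
    have "adj K4 (f u) (f v) \<longleftrightarrow> f u \<noteq> f v" using fr[OF uv(1)] fr[OF uv(2)] by (auto simp: K4_adj K4_V)
    also have "\<dots> \<longleftrightarrow> u \<noteq> v" using injf uv by (auto dest: inj_onD)
    also have "\<dots> \<longleftrightarrow> adj H u v" using cpl uv no_self_adj[OF wf] by metis
    finally show "adj K4 (f u) (f v) \<longleftrightarrow> adj H u v" .
  qed
  have "card (gE H) = card (gE K4)" using cE card_K4_E by simp
  then obtain g where "isom H K4 f g" using iso_crit[OF wf wf_K4 bf ad simple_K4] by blast
  then show ?thesis using iso_isom by blast
qed

lemma adj_contract_edge:
  assumes "(i, j) \<in> gE C6bar" "\<not> {i, j} \<subseteq> X" "cl X i = u" "cl X j = v"
  shows "adj (contract C6bar X) u v"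
proof -
  have "ends (contract C6bar X) (i, j) = {cl X i, cl X j}"
    by (simp only: contract_simps C6bar_ends image_insert image_empty)
  then have "ends (contract C6bar X) (i, j) = {u, v}" using assms(3,4) by simp
  moreover have "(i, j) \<in> gE (contract C6bar X)" using assms(1,2) by (simp add: C6bar_ends)
  ultimately show ?thesis unfolding adj_def by blast
qed

lemma K4D_C6bar: "K4D C6bar"
proof -
  let ?X = "{0, 2, 4} :: nat set"
  have V6: "gV C6bar = {0,1,2,3,4,5}" by (auto simp: C6bar_V less6)
  have XV: "?X \<subseteq> gV C6bar" by (auto simp: C6bar_V)
  have Y: "gV C6bar - ?X = {1, 3, 5}" unfolding V6 by auto
  have cut: "cut C6bar ?X = {(0,3),(1,4),(2,5)}"
  proof (rule set_eqI)
    fix e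
    show "e \<in> cut C6bar ?X \<longleftrightarrow> e \<in> {(0,3),(1,4),(2,5)}"
    proof
      assume "e \<in> cut C6bar ?X"
      then have "e \<in> gE C6bar" "card (ends C6bar e \<inter> ?X) = 1" unfolding cut_def by auto
      then show "e \<in> {(0,3),(1,4),(2,5)}" unfolding C6bar_E by (elim insertE emptyE) (simp_all add: C6bar_ends)
    next
      assume "e \<in> {(0,3),(1,4),(2,5)}"
      then show "e \<in> cut C6bar ?X" unfolding cut_def C6bar_E by (elim insertE emptyE) (simp_all add: C6bar_ends)
    qed
  qed
  have nt: "nontrivial_3cut C6bar ?X" unfolding nontrivial_3cut_def cut Y using XV by simp
  have wf1: "wf_graph (contract C6bar ?X)" using wf_contract[OF wf_C6bar XV] by simp
  have wf2: "wf_graph (contract C6bar {1,3,5})" using wf_contract[OF wf_C6bar, of "{1,3,5}"] by (simp add: C6bar_V)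
  have r1: "rep ?X \<in> ?X" using rep_in[of ?X] by simp
  have r2: "rep {1,3,5::nat} \<in> {1,3,5}" using rep_in[of "{1,3,5::nat}"] by simp
  have i1: "iso (contract C6bar ?X) K4"
  proof (rule K4crit[OF wf1, of 1 3 5 "rep ?X"])
    show "gV (contract C6bar ?X) = {1, 3, 5, rep ?X}" unfolding contract_simps Y by auto
    show "1 \<noteq> (3::nat)" "1 \<noteq> (5::nat)" "1 \<noteq> rep ?X" "3 \<noteq> (5::nat)" "3 \<noteq> rep ?X" "5 \<noteq> rep ?X" using r1 by auto
    have E: "gE (contract C6bar ?X) = {(0,3),(1,3),(1,4),(1,5),(2,5),(3,5)}"
      unfolding contract_simps C6bar_E by (auto simp: C6bar_ends)
    show "card (gE (contract C6bar ?X)) = 6" unfolding E by simp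
    have a: "adj (contract C6bar ?X) 1 3" "adj (contract C6bar ?X) 1 5" "adj (contract C6bar ?X) 3 5"
      "adj (contract C6bar ?X) 1 (rep ?X)" "adj (contract C6bar ?X) (rep ?X) 3" "adj (contract C6bar ?X) (rep ?X) 5"
    proof -
      show "adj (contract C6bar ?X) 1 3" by (rule adj_contract_edge[of 1 3]) (simp_all add: C6bar_E)
      show "adj (contract C6bar ?X) 1 5" by (rule adj_contract_edge[of 1 5]) (simp_all add: C6bar_E)
      show "adj (contract C6bar ?X) 3 5" by (rule adj_contract_edge[of 3 5]) (simp_all add: C6bar_E)
      show "adj (contract C6bar ?X) 1 (rep ?X)" by (rule adj_contract_edge[of 1 4]) (simp_all add: C6bar_E)
      show "adj (contract C6bar ?X) (rep ?X) 3" by (rule adj_contract_edge[of 0 3]) (simp_all add: C6bar_E)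
      show "adj (contract C6bar ?X) (rep ?X) 5" by (rule adj_contract_edge[of 2 5]) (simp_all add: C6bar_E)
    qed
    have V: "gV (contract C6bar ?X) = {1, 3, 5, rep ?X}" unfolding contract_simps Y by auto
    show "\<forall>u\<in>gV (contract C6bar ?X). \<forall>v\<in>gV (contract C6bar ?X). u \<noteq> v \<longrightarrow> adj (contract C6bar ?X) u v"
      unfolding V using a adj_sym by (metis empty_iff insert_iff)
  qed
  have i2: "iso (contract C6bar {1,3,5}) K4"
  proof (rule K4crit[OF wf2, of 0 2 4 "rep {1,3,5::nat}"])
    have V: "gV (contract C6bar {1,3,5}) = {0, 2, 4, rep {1,3,5::nat}}" unfolding contract_simps V6 by auto
    show "gV (contract C6bar {1,3,5}) = {0, 2, 4, rep {1,3,5::nat}}" using V .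
    show "0 \<noteq> (2::nat)" "0 \<noteq> (4::nat)" "0 \<noteq> rep {1,3,5::nat}" "2 \<noteq> (4::nat)" "2 \<noteq> rep {1,3,5::nat}"
      "4 \<noteq> rep {1,3,5::nat}" using r2 by auto
    have E: "gE (contract C6bar {1,3,5}) = {(0,2),(0,3),(0,4),(1,4),(2,4),(2,5)}"
      unfolding contract_simps C6bar_E by (auto simp: C6bar_ends)
    show "card (gE (contract C6bar {1,3,5})) = 6" unfolding E by simp
    have a: "adj (contract C6bar {1,3,5}) 0 2" "adj (contract C6bar {1,3,5}) 0 4" "adj (contract C6bar {1,3,5}) 2 4"
      "adj (contract C6bar {1,3,5}) 0 (rep {1,3,5})" "adj (contract C6bar {1,3,5}) (rep {1,3,5}) 4"
      "adj (contract C6bar {1,3,5}) 2 (rep {1,3,5})"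
    proof -
      show "adj (contract C6bar {1,3,5}) 0 2" by (rule adj_contract_edge[of 0 2]) (simp_all add: C6bar_E)
      show "adj (contract C6bar {1,3,5}) 0 4" by (rule adj_contract_edge[of 0 4]) (simp_all add: C6bar_E)
      show "adj (contract C6bar {1,3,5}) 2 4" by (rule adj_contract_edge[of 2 4]) (simp_all add: C6bar_E)
      show "adj (contract C6bar {1,3,5}) 0 (rep {1,3,5})" by (rule adj_contract_edge[of 0 3]) (simp_all add: C6bar_E)
      show "adj (contract C6bar {1,3,5}) (rep {1,3,5}) 4" by (rule adj_contract_edge[of 1 4]) (simp_all add: C6bar_E)
      show "adj (contract C6bar {1,3,5}) 2 (rep {1,3,5})" by (rule adj_contract_edge[of 2 5]) (simp_all add: C6bar_E)
    qed
    show "\<forall>u\<in>gV (contract C6bar {1,3,5}). \<forall>v\<in>gV (contract C6bar {1,3,5}). u \<noteq> v \<longrightarrow> adj (contract C6bar {1,3,5}) u v"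
      unfolding V using a adj_sym by (metis empty_iff insert_iff)
  qed
  have k1: "K4D (contract C6bar ?X)" using K4D.base[OF wf1 i1] .
  have k2: "K4D (contract C6bar (gV C6bar - ?X))" using K4D.base[OF wf2 i2] Y by simp
  show ?thesis using K4D.step[OF wf_C6bar nt k1 k2] .
qed


lemma deg_rep:
  assumes wf: "wf_graph G" and Y: "Y \<noteq> {}"
  shows "degree (contract G Y) (rep Y) = card (cut G Y)"
proof -
  have "{e \<in> gE (contract G Y). rep Y \<in> ends (contract G Y) e} = cut G Y"
  proof (intro set_eqI iffI)
    fix e assume "e \<in> {e \<in> gE (contract G Y). rep Y \<in> ends (contract G Y) e}"
    then have e: "e \<in> gE G" "\<not> ends G e \<subseteq> Y" "rep Y \<in> cl Y ` ends G e" by auto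
    then have "ends G e \<inter> Y \<noteq> {}" using img_cl_rep[OF Y] by blast
    then show "e \<in> cut G Y" unfolding cut_def using cut_edge_iff[OF wf e(1)] e by blast
  next
    fix e assume "e \<in> cut G Y"
    then have e: "e \<in> gE G" "card (ends G e \<inter> Y) = 1" unfolding cut_def by auto
    then have "\<not> ends G e \<subseteq> Y" "ends G e \<inter> Y \<noteq> {}" using cut_edge_iff[OF wf e(1)] by blast+
    then show "e \<in> {e \<in> gE (contract G Y). rep Y \<in> ends (contract G Y) e}"
      using e img_cl_rep[OF Y] by auto
  qed
  then show ?thesis unfolding degree_def by simp
qed

lemma tl_card: "tri_ladder H \<Longrightarrow> card (gV H) \<ge> 6"
proof (induction rule: tri_ladder.induct)
  case (base G)
  then obtain f g where "isom G C6bar f g" unfolding iso_isom by blast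
  then have "card (gV G) = card (gV C6bar)" using isom_card by blast
  then show ?case by (simp add: C6bar_V)
next
  case (step H u v G)
  obtain X where X: "X \<subseteq> gV G" "X \<noteq> {}" "gV G - X \<noteq> {}"
    "iso_at (contract G X) (rep X) H u" "iso_at (contract G (gV G - X)) (rep (gV G - X)) K4 v"
    using step.hyps(5) unfolding splicing_def by blast
  have rX: "rep X \<in> X" using rep_in[OF X(2)] .
  obtain f g where i1: "isom (contract G X) H f g" using X(4) unfolding iso_at_isom by blast
  have c1: "card (gV (contract G X)) \<ge> 6" using isom_card[OF i1] step.IH by simp
  obtain f2 g2 where i2: "isom (contract G (gV G - X)) K4 f2 g2" using X(5) unfolding iso_at_isom by blast
  have c2: "card (gV (contract G (gV G - X))) = 4" using isom_card[OF i2] card_K4 by simp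
  have A: "gV (contract G X) = insert (rep X) (gV G - X)" by simp
  have fA: "finite (gV G - X)"
  proof (rule ccontr)
    assume "infinite (gV G - X)"
    then have "card (gV (contract G X)) = 0" using A by simp
    then show False using c1 by simp
  qed
  have cA: "card (gV G - X) \<ge> 5" using c1 A fA rX by simp
  have B: "gV (contract G (gV G - X)) = insert (rep (gV G - X)) X" using X(1) by auto
  have fB: "finite X"
  proof (rule ccontr)
    assume "infinite X"
    then have "card (gV (contract G (gV G - X))) = 0" using B by simp
    then show False using c2 by simp
  qed
  have "gV G = X \<union> (gV G - X)" using X(1) by auto
  then have fin: "finite (gV G)" using fA fB by (metis finite_Un)
  have "card (gV G) = card X + card (gV G - X)"
    using card_Diff_subset[OF fB X(1)] card_mono[OF fin X(1)] by simp
  moreover have "card X \<ge> 1" using fB X(2) by (simp add: Suc_leI card_gt_0_iff)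
  ultimately show ?case using cA by simp
qed

lemma dirA: "tri_ladder H \<Longrightarrow> wf_graph G \<Longrightarrow> iso G H \<Longrightarrow> K4D G"
proof (induction arbitrary: G rule: tri_ladder.induct)
  case (base H)
  have "iso G C6bar" using iso_trans base by blast
  then show ?case using K4D_iso[OF K4D_C6bar base.prems(1)] by blast
next
  case (step H u v G0 G)
  note wf = step.prems(1)
  obtain X where X: "X \<subseteq> gV G0" "X \<noteq> {}" "gV G0 - X \<noteq> {}"
    "iso_at (contract G0 X) (rep X) H u" "iso_at (contract G0 (gV G0 - X)) (rep (gV G0 - X)) K4 v"
    using step.hyps(5) unfolding splicing_def by blast
  obtain f g where im: "isom G G0 f g" using step.prems(2) unfolding iso_isom by blast
  have bf: "bij_betw f (gV G) (gV G0)" using im unfolding isom_def by auto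
  define X' where "X' = {x \<in> gV G. f x \<in> X}"
  have X'V: "X' \<subseteq> gV G" unfolding X'_def by auto
  have fX': "f ` X' = X" unfolding X'_def using bf X(1) by (auto simp: bij_betw_def)
  have fY': "f ` (gV G - X') = gV G0 - X"
    using bf X(1) unfolding X'_def bij_betw_def by (auto simp: inj_on_def)
  have X'ne: "X' \<noteq> {}" using fX' X(2) by auto
  have Y'ne: "gV G - X' \<noteq> {}" using fY' X(3) by auto
  have fin: "finite (gV G)" using wf_fin(1)[OF wf] .
  have wA: "wf_graph (contract G X')" using wf_contract[OF wf X'V X'ne] .
  have wB: "wf_graph (contract G (gV G - X'))" using wf_contract[OF wf _ Y'ne] by blast
  have iA: "iso (contract G X') (contract G0 X)" using iso_contract[OF wf im X'V X'ne] fX' by simp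
  have YV: "gV G - X' \<subseteq> gV G" by blast
  have iB0: "iso (contract G (gV G - X')) (contract G0 (f ` (gV G - X')))"
    using iso_contract[OF wf im YV Y'ne] .
  have iB: "iso (contract G (gV G - X')) (contract G0 (gV G0 - X))" using iB0 unfolding fY' .
  have h4: "iso (contract G0 X) H" using X(4) unfolding iso_at_isom iso_isom by blast
  have h5: "iso (contract G0 (gV G0 - X)) K4" using X(5) unfolding iso_at_isom iso_isom by blast
  have iA2: "iso (contract G X') H" using iso_trans[OF iA h4] .
  obtain f2 g2 where imB: "isom (contract G (gV G - X')) K4 f2 g2"
    using iso_trans[OF iB h5] unfolding iso_isom by blast
  have kA: "K4D (contract G X')" using step.IH[OF wA iA2] .
  have kB: "K4D (contract G (gV G - X'))" using K4D.base[OF wB] imB unfolding iso_isom by blast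
  have cH: "card (gV H) \<ge> 6" using tl_card[OF step.hyps(1)] .
  obtain f1 g1 where "isom (contract G X') H f1 g1" using iA2 unfolding iso_isom by blast
  then have "card (gV (contract G X')) = card (gV H)" using isom_card by blast
  then have c1: "card (gV G - X') \<ge> 5" using card_contract[OF fin X'V X'ne] cH by simp
  have "card (gV (contract G (gV G - X'))) = 4" using isom_card[OF imB] card_K4 by simp
  then have "card (gV G - (gV G - X')) = 3" using card_contract[OF fin _ Y'ne] by simp
  then have c2: "card X' = 3" using X'V by (simp add: double_diff)
  have rY: "rep (gV G - X') \<in> gV (contract G (gV G - X'))" by simp
  have "degree (contract G (gV G - X')) (rep (gV G - X')) = 3"
  proof -
    have "f2 (rep (gV G - X')) \<in> gV K4" using imB rY unfolding isom_def by (metis bij_betwE)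
    then have "degree K4 (f2 (rep (gV G - X'))) = 3" using K4_degree by blast
    then show ?thesis using isom_degree[OF wB imB rY] by simp
  qed
  then have "card (cut G (gV G - X')) = 3" using deg_rep[OF wf Y'ne] by simp
  then have c3: "card (cut G X') = 3" using cut_compl[OF wf X'V] by simp
  have nt: "nontrivial_3cut G X'" unfolding nontrivial_3cut_def using X'V c1 c2 c3 by simp
  show ?case using K4D.step[OF wf nt kA kB] .
qed

lemma tri_in_triangle:
  assumes "tri G T" "u \<in> T" shows "in_triangle G u"
proof -
  obtain a b c where t: "T = {a, b, c}" "a \<noteq> b" "b \<noteq> c" "a \<noteq> c"
    "adj G a b" "adj G b c" "adj G a c" using assms(1) unfolding tri_def by blast
  have s: "adj G b a" "adj G c b" "adj G c a" using t(5-7) adj_sym by metis+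
  have "u = a \<or> u = b \<or> u = c" using assms(2) t(1) by auto
  then show ?thesis unfolding in_triangle_def
  proof (elim disjE)
    assume "u = a" then show "\<exists>v w. u \<noteq> v \<and> v \<noteq> w \<and> u \<noteq> w \<and> adj G u v \<and> adj G v w \<and> adj G u w"
      using t s by blast
  next
    assume "u = b" then show "\<exists>v w. u \<noteq> v \<and> v \<noteq> w \<and> u \<noteq> w \<and> adj G u v \<and> adj G v w \<and> adj G u w"
      using t s by (intro exI[of _ a] exI[of _ c]) auto
  next
    assume "u = c" then show "\<exists>v w. u \<noteq> v \<and> v \<noteq> w \<and> u \<noteq> w \<and> adj G u v \<and> adj G v w \<and> adj G u w"
      using t s by (intro exI[of _ a] exI[of _ b]) auto
  qed
qed

lemma dirB:
  "wf_graph G \<Longrightarrow> cubic G \<Longrightarrow> ec3 G \<Longrightarrow> finite F \<Longrightarrow> card F \<le> 2 \<Longrightarrow> bipartite (delete_edges G F) \<Longrightarrow>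
   K4D G \<Longrightarrow> card (gV G) \<ge> 5 \<Longrightarrow> tri_ladder G"
proof (induction "card (gV G)" arbitrary: G F rule: less_induct)
  case less
  note wf = less.prems(1) and cub = less.prems(2) and ec = less.prems(3) and k = less.prems(7)
    and c5 = less.prems(8)
  obtain T1 T2 where T: "tri G T1" "tri G T2" "T1 \<inter> T2 = {}" using Q_two_tri[OF k c5] by blast
  obtain a b c where t: "T1 = {a, b, c}" "a \<noteq> b" "b \<noteq> c" "a \<noteq> c"
    "a \<in> gV G" "b \<in> gV G" "c \<in> gV G" "adj G a b" "adj G b c" "adj G a c"
    using T(1) unfolding tri_def by blast
  have fin: "finite (gV G)" using wf_fin(1)[OF wf] .
  have TV: "T1 \<subseteq> gV G" using t by auto
  have Tne: "T1 \<noteq> {}" using t(1) by auto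
  have kT: "K4D (contract G T1)" using L_contract_tri[OF k cub ec c5 t(5-7) t(2-4) t(8-10)] t(1) by simp
  have cc: "card (gV (contract G T1)) = card (gV G) - 3 + 1"
    using card_contract[OF fin TV Tne] card_Diff_subset[OF finite_subset[OF TV fin] TV] tri_card[OF T(1)] by simp
  have "card (gV (contract G T1)) \<ge> 4" using K4D_card[OF kT] .
  then have c6: "card (gV G) \<ge> 6" using cc c5 by simp
  show ?case
  proof (cases "card (gV G) = 6")
    case True
    show ?thesis using tri_ladder.base[OF base6[OF wf cub ec True T]] .
  next
    case False
    then have c7: "card (gV G) \<ge> 7" using c6 by simp
    define G' where "G' = contract G T1"
    have cG': "card (gV G') \<ge> 5" "card (gV G') < card (gV G)" using cc c7 unfolding G'_def by simp_all
    have c4: "card (gV G) \<ge> 4" using c6 by simp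
    obtain eab ebc eac ra rb rc where D0:
      "eab \<in> gE G" "ends G eab = {a, b}" "ebc \<in> gE G" "ends G ebc = {b, c}"
      "eac \<in> gE G" "ends G eac = {a, c}"
      "cut G {a, b, c} = {ra, rb, rc}" "ra \<noteq> rb" "rb \<noteq> rc" "ra \<noteq> rc"
      "Ed G a = {eab, eac, ra}" "Ed G b = {eab, ebc, rb}" "Ed G c = {eac, ebc, rc}"
      using tri_data[OF wf cub ec t(5-7) t(2-4) t(8-10) c4] by blast
    note D = D0(7-10)
    have cT: "card T1 = 3" using tri_card[OF T(1)] .
    have "card (gV G - T1) = card (gV G) - 3" using card_Diff_subset[OF finite_subset[OF TV fin] TV] cT by simp
    then have cY: "card (gV G - T1) \<ge> 2" using c6 by simp
    have ntT: "nontrivial_3cut G T1" unfolding nontrivial_3cut_def using TV cT cY D t(1) by simp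
    have wf': "wf_graph G'" unfolding G'_def using wf_contract[OF wf TV Tne] .
    have cub': "cubic G'" unfolding G'_def using cubic_contract[OF wf cub ntT] .
    have ec': "ec3 G'" unfolding G'_def using ec3_contract[OF wf ec TV Tne] .
    obtain F' where F': "finite F'" "card F' \<le> 2" "bipartite (delete_edges G' F')"
      using trans_contract[OF wf cub ec t(5-7) t(2-4) t(8-10) c4 less.prems(4-6)] t(1) unfolding G'_def by blast
    have k': "K4D G'" using kT unfolding G'_def .
    have tl': "tri_ladder G'" using less.hyps[OF cG'(2) wf' cub' ec' F' k' cG'(1)] .
    have ru: "rep T1 \<in> gV G'" unfolding G'_def by simp
    obtain S1 S2 where S: "tri G' S1" "tri G' S2" "S1 \<inter> S2 = {}" using Q_two_tri[OF k' cG'(1)] by blast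
    have intri: "in_triangle G' (rep T1)"
    proof (rule ccontr)
      assume n: "\<not> in_triangle G' (rep T1)"
      have n1: "rep T1 \<notin> S1" "rep T1 \<notin> S2"
        using tri_in_triangle[OF S(1)] tri_in_triangle[OF S(2)] n by auto
      have u1: "tri G S1" "S1 \<subseteq> gV G - T1" using tri_up[OF S(1)[unfolded G'_def] n1(1) Tne] by simp_all
      have u2: "tri G S2" "S2 \<subseteq> gV G - T1" using tri_up[OF S(2)[unfolded G'_def] n1(2) Tne] by simp_all
      have "T1 \<inter> S1 = {}" "T1 \<inter> S2 = {}" using u1(2) u2(2) by auto
      then show False using three_tri[OF wf T(1) u1(1) u2(1) _ _ S(3) less.prems(4-6)] by blast
    qed
    obtain v where v: "iso_at (contract G (gV G - T1)) (rep (gV G - T1)) K4 v" "v \<in> gV K4"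
      using K4_side[OF wf cub ec t(5-7) t(2-4) t(8-10) c5] t(1) by blast
    have Yne: "gV G - T1 \<noteq> {}" using cY by (intro notI) simp
    have "iso_at (contract G T1) (rep T1) G' (rep T1)"
      unfolding G'_def iso_at_isom using isom_refl[of "contract G T1"] by auto
    then have sp: "splicing G G' (rep T1) K4 v"
      unfolding splicing_def using TV Tne Yne v(1) by blast
    show ?thesis using tri_ladder.step[OF tl' ru intri v(2) sp] .
  qed
qed

theorem mainTheorem14:
  fixes G :: "('v, 'e) mgraph"
  assumes "wf_graph G"
    and "cubic G"
    and "near_bipartite G"
    and "brick G"
    and "card (gV G) \<ge> 6"
  shows "has_K4_decomposition G \<longleftrightarrow> tri_ladder G"
proof
  have ec: "ec3 G" using brick_ec3[OF assms(1)] assms(4,5) unfolding brick_def by blast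
  obtain e1 e2 where e: "e1 \<noteq> e2" "bipartite (delete_edges G {e1, e2})"
    using assms(3) unfolding near_bipartite_def by blast
  have F: "finite {e1, e2}" "card {e1, e2} \<le> 2" by (auto simp: card_insert_if)
  assume "has_K4_decomposition G"
  then have "K4D G" using K4D_iff[OF assms(1)] by simp
  then show "tri_ladder G" using dirB[OF assms(1,2) ec F e(2)] assms(5) by simp
next
  assume "tri_ladder G"
  then have "K4D G" using dirA[OF _ assms(1) iso_refl] by blast
  then show "has_K4_decomposition G" using K4D_iff[OF assms(1)] by simp
qed


end
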